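(* Let $(H,h)$ be an equivariant pair and let $\{(H_n,h_n)\}$ be a tame sequence derived from $(H,h)$. Then there exist $f,g\in\mathcal{I}$ such that, setting $H'=fHg$ and $h'=fhg$, there is a subsequence along which $H_n$ converges to $H'$ uniformly on compact subsets of $\mathbb{H}^3$ and $h_n$ converges to $h'$ uniformly on $S$.
   Context: $\mathbb{H}^3$ is the upper half space model $\mathbb{C}\times(0,\infty)$ of hyperbolic $3$-space, with ideal boundary the Riemann sphere $S=\mathbb{C}\cup\{\infty\}$ (uniform convergence on $S$ is with respect to the spherical metric); $\mathcal{I}$ is the isometry group of $\mathbb{H}^3$, and each element of $\mathcal{I}$ extends to a conformal transformation of $S$, so $\mathcal{I}$ acts on $\mathbb{H}^3\cup S$. A nice lattice is a subgroup $\Gamma\subset\mathcal{I}$ acting freely, properly discontinuously and cocompactly on $\mathbb{H}^3$. An equivariant pair $(H,h)$ consists of a bi-Lipschitz bijection $H:\mathbb{H}^3\to\mathbb{H}^3$ and a homeomorphism $h:S\to S$ such that $H\cup h$ is continuous on $\mathbb{H}^3\cup S$, together with nice lattices $\Gamma_1,\Gamma_2$ with $H\Gamma_1H^{-1}=\Gamma_2$ and $h\Gamma_1h^{-1}=\Gamma_2$. A sequence $\{(H_n,h_n)\}$ is derived from $(H,h)$ if $H_n=f_nHg_n$ and $h_n=f_nhg_n$ for some $f_n,g_n\in\mathcal{I}$; it is tame if $\{H_n(p)\}$ is bounded for every $p\in\mathbb{H}^3$. *)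

theory Defs
  imports "HOL-Analysis.Analysis" "HOL-Library.FuncSet"
begin

type_synonym hpt = "complex \<times> real"
type_synonym spt = "complex option"       (* Riemann sphere: Some z, None = \<infinity> *)

definition H3 :: "hpt set" where
  "H3 = {p. snd p > 0}"

definition hdist :: "hpt \<Rightarrow> hpt \<Rightarrow> real" where
  "hdist p q = arcosh (1 + ((cmod (fst p - fst q))\<^sup>2 + (snd p - snd q)\<^sup>2) / (2 * snd p * snd q))"

text \<open>Embedding of the closed upper half space (plus \<infinity>) onto the closed unit ball of
  R^3 = C x R, by inversion in the sphere of radius sqrt 2 centred at (0,-1).
  On the boundary it is inverse stereographic projection, so the induced metric on S
  is the chordal (spherical) metric.\<close>

definition phiH :: "hpt \<Rightarrow> complex \<times> real" where
  "phiH p = (let D = (cmod (fst p))\<^sup>2 + (snd p + 1)\<^sup>2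
             in (of_real (2 / D) * fst p, -1 + 2 * (snd p + 1) / D))"

definition phiS :: "spt \<Rightarrow> complex \<times> real" where
  "phiS x = (case x of None \<Rightarrow> (0, -1) | Some z \<Rightarrow> phiH (z, 0))"

definition sdist :: "spt \<Rightarrow> spt \<Rightarrow> real" where
  "sdist a b = dist (phiS a) (phiS b)"

definition Hbar :: "(hpt + spt) set" where
  "Hbar = Inl ` H3 \<union> range Inr"

fun bemb :: "hpt + spt \<Rightarrow> complex \<times> real" where
  "bemb (Inl p) = phiH p"
| "bemb (Inr x) = phiS x"

fun bext :: "(hpt \<Rightarrow> hpt) \<Rightarrow> (spt \<Rightarrow> spt) \<Rightarrow> hpt + spt \<Rightarrow> hpt + spt" where
  "bext F f (Inl p) = Inl (F p)"
| "bext F f (Inr x) = Inr (f x)"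

definition bar_continuous :: "(hpt \<Rightarrow> hpt) \<Rightarrow> (spt \<Rightarrow> spt) \<Rightarrow> bool" where
  "bar_continuous F f \<longleftrightarrow>
     (\<forall>x\<in>Hbar. \<forall>e>0. \<exists>d>0. \<forall>y\<in>Hbar.
        dist (bemb y) (bemb x) < d \<longrightarrow> dist (bemb (bext F f y)) (bemb (bext F f x)) < e)"

text \<open>An element of the isometry group is represented by the pair (isometry of H3,
  its boundary extension); the H3-part is made extensional on H3.\<close>
definition Isom :: "((hpt \<Rightarrow> hpt) \<times> (spt \<Rightarrow> spt)) set" where
  "Isom = {(G, g). G \<in> extensional H3 \<and> bij_betw G H3 H3 \<and>
                   (\<forall>p\<in>H3. \<forall>q\<in>H3. hdist (G p) (G q) = hdist p q) \<and>
                   bar_continuous G g}"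

definition iso_id :: "(hpt \<Rightarrow> hpt) \<times> (spt \<Rightarrow> spt)" where
  "iso_id = (restrict id H3, id)"

definition iso_comp ::
  "(hpt \<Rightarrow> hpt) \<times> (spt \<Rightarrow> spt) \<Rightarrow> (hpt \<Rightarrow> hpt) \<times> (spt \<Rightarrow> spt) \<Rightarrow> (hpt \<Rightarrow> hpt) \<times> (spt \<Rightarrow> spt)" where
  "iso_comp a b = (restrict (fst a \<circ> fst b) H3, snd a \<circ> snd b)"

definition iso_inv :: "(hpt \<Rightarrow> hpt) \<times> (spt \<Rightarrow> spt) \<Rightarrow> (hpt \<Rightarrow> hpt) \<times> (spt \<Rightarrow> spt)" where
  "iso_inv a = (restrict (inv_into H3 (fst a)) H3, inv (snd a))"

definition nice_lattice :: "((hpt \<Rightarrow> hpt) \<times> (spt \<Rightarrow> spt)) set \<Rightarrow> bool" where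
  "nice_lattice \<Gamma> \<longleftrightarrow>
     \<Gamma> \<subseteq> Isom \<and> iso_id \<in> \<Gamma> \<and>
     (\<forall>a\<in>\<Gamma>. \<forall>b\<in>\<Gamma>. iso_comp a b \<in> \<Gamma>) \<and> (\<forall>a\<in>\<Gamma>. iso_inv a \<in> \<Gamma>) \<and>
     \<comment> \<open>free action\<close>
     (\<forall>a\<in>\<Gamma>. \<forall>p\<in>H3. fst a p = p \<longrightarrow> a = iso_id) \<and>
     \<comment> \<open>properly discontinuous\<close>
     (\<forall>K. compact K \<and> K \<subseteq> H3 \<longrightarrow> finite {a\<in>\<Gamma>. fst a ` K \<inter> K \<noteq> {}}) \<and>
     \<comment> \<open>cocompact\<close>
     (\<exists>K. compact K \<and> K \<subseteq> H3 \<and> (\<Union>a\<in>\<Gamma>. fst a ` K) = H3)"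

definition bilipschitz_bij :: "(hpt \<Rightarrow> hpt) \<Rightarrow> bool" where
  "bilipschitz_bij F \<longleftrightarrow> bij_betw F H3 H3 \<and>
     (\<exists>L\<ge>1. \<forall>p\<in>H3. \<forall>q\<in>H3. hdist p q / L \<le> hdist (F p) (F q) \<and> hdist (F p) (F q) \<le> L * hdist p q)"

definition s_continuous :: "(spt \<Rightarrow> spt) \<Rightarrow> bool" where
  "s_continuous f \<longleftrightarrow> (\<forall>x. \<forall>e>0. \<exists>d>0. \<forall>y. sdist y x < d \<longrightarrow> sdist (f y) (f x) < e)"

definition s_homeomorphism :: "(spt \<Rightarrow> spt) \<Rightarrow> bool" where
  "s_homeomorphism f \<longleftrightarrow> bij f \<and> s_continuous f \<and> s_continuous (inv f)"

definition equivariant_pair :: "(hpt \<Rightarrow> hpt) \<Rightarrow> (spt \<Rightarrow> spt) \<Rightarrow> bool" where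
  "equivariant_pair F f \<longleftrightarrow>
     bilipschitz_bij F \<and> s_homeomorphism f \<and> bar_continuous F f \<and>
     (\<exists>\<Gamma>1 \<Gamma>2. nice_lattice \<Gamma>1 \<and> nice_lattice \<Gamma>2 \<and>
        (\<lambda>a. restrict (F \<circ> fst a \<circ> inv_into H3 F) H3) ` \<Gamma>1 = fst ` \<Gamma>2 \<and>
        (\<lambda>a. f \<circ> snd a \<circ> inv f) ` \<Gamma>1 = snd ` \<Gamma>2)"

definition derived_seq ::
  "(hpt \<Rightarrow> hpt) \<Rightarrow> (spt \<Rightarrow> spt) \<Rightarrow> (nat \<Rightarrow> hpt \<Rightarrow> hpt) \<Rightarrow> (nat \<Rightarrow> spt \<Rightarrow> spt) \<Rightarrow> bool" where
  "derived_seq F f Fs fs \<longleftrightarrow>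
     (\<exists>a b. (\<forall>n. a n \<in> Isom \<and> b n \<in> Isom) \<and>
        (\<forall>n. \<forall>p\<in>H3. Fs n p = fst (a n) (F (fst (b n) p))) \<and>
        (\<forall>n. fs n = snd (a n) \<circ> f \<circ> snd (b n)))"

definition tame_seq :: "(nat \<Rightarrow> hpt \<Rightarrow> hpt) \<Rightarrow> bool" where
  "tame_seq Fs \<longleftrightarrow> (\<forall>p\<in>H3. \<exists>q\<in>H3. \<exists>R. \<forall>n. hdist (Fs n p) q \<le> R)"

end

theory Submission
  imports Defs
begin

lemma mob_norm_scalar:
  fixes al b g d :: real
  assumes "d = 1+2*b+al*g" "d \<noteq> 0"
  shows "(1/d)^2 * ((1+2*b+g)^2*al + 2*(1+2*b+g)*(1-al)*b + (1-al)^2*g) = 1 - (1-al)*(1-g)/d"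
proof -
  have e: "(1+2*b+g)^2*al + 2*(1+2*b+g)*(1-al)*b + (1-al)^2*g = d^2 - (1-al)*(1-g)*d"
    unfolding assms(1) by algebra
  have "(1/d)^2 * (d^2 - (1-al)*(1-g)*d) = 1 - (1-al)*(1-g)/d"
    using assms(2) by (simp add: field_simps power2_eq_square)
  thus ?thesis unfolding e .
qed

lemma mob_dist_scalar:
  fixes al b1 b2 g1 g2 dl dx dy :: real
  assumes "dx = 1+2*b1+al*g1" "dy = 1+2*b2+al*g2" "dx \<noteq> 0" "dy \<noteq> 0"
  shows "((1+2*b1+g1)/dx - (1+2*b2+g2)/dy)^2 * al + ((1-al)/dx)^2 * g1 + (-((1-al)/dy))^2 * g2
     + 2*((1+2*b1+g1)/dx - (1+2*b2+g2)/dy)*((1-al)/dx)*b1 + 2*((1+2*b1+g1)/dx - (1+2*b2+g2)/dy)*(-((1-al)/dy))*b2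
     + 2*((1-al)/dx)*(-((1-al)/dy))*dl = (1-al)^2 * (g1 + g2 - 2*dl) / (dx*dy)"
proof -
  have e: "((1+2*b1+g1)*dy - (1+2*b2+g2)*dx)^2 * al + ((1-al)*dy)^2 * g1 + ((1-al)*dx)^2 * g2
     + 2*((1+2*b1+g1)*dy - (1+2*b2+g2)*dx)*((1-al)*dy)*b1 - 2*((1+2*b1+g1)*dy - (1+2*b2+g2)*dx)*((1-al)*dx)*b2
     - 2*((1-al)*dy)*((1-al)*dx)*dl = (1-al)^2 * (g1 + g2 - 2*dl) * (dx*dy)"
    unfolding assms(1,2) by algebra
  define P1 P2 where "P1 = 1+2*b1+g1" "P2 = 1+2*b2+g2"
  define Q where "Q = 1 - al"
  have e2: "(P1*dy - P2*dx)^2 * al + (Q*dy)^2 * g1 + (Q*dx)^2 * g2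
     + 2*(P1*dy - P2*dx)*(Q*dy)*b1 - 2*(P1*dy - P2*dx)*(Q*dx)*b2
     - 2*(Q*dy)*(Q*dx)*dl = Q^2 * (g1 + g2 - 2*dl) * (dx*dy)" using e unfolding P1_P2_def Q_def .
  have "(P1/dx - P2/dy)^2 * al + (Q/dx)^2 * g1 + (-(Q/dy))^2 * g2
     + 2*(P1/dx - P2/dy)*(Q/dx)*b1 + 2*(P1/dx - P2/dy)*(-(Q/dy))*b2
     + 2*(Q/dx)*(-(Q/dy))*dl = ((P1*dy - P2*dx)^2 * al + (Q*dy)^2 * g1 + (Q*dx)^2 * g2
     + 2*(P1*dy - P2*dx)*(Q*dy)*b1 - 2*(P1*dy - P2*dx)*(Q*dx)*b2
     - 2*(Q*dy)*(Q*dx)*dl) / (dx*dy)^2"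
    using assms(3,4) by (simp add: field_simps power2_eq_square)
  also have "\<dots> = Q^2 * (g1 + g2 - 2*dl) / (dx*dy)"
    unfolding e2 using assms(3,4) by (simp add: power2_eq_square)
  finally show ?thesis unfolding P1_P2_def Q_def .
qed

definition den :: "'a::real_inner \<Rightarrow> 'a \<Rightarrow> real" where
  "den a x = 1 + 2 * inner a x + (norm a)\<^sup>2 * (norm x)\<^sup>2"

definition mob :: "'a::real_inner \<Rightarrow> 'a \<Rightarrow> 'a" where
  "mob a x = (1 / den a x) *\<^sub>R ((1 + 2 * inner a x + (norm x)\<^sup>2) *\<^sub>R a + (1 - (norm a)\<^sup>2) *\<^sub>R x)"

lemma norm_comb2: "(norm (c1 *\<^sub>R a + c2 *\<^sub>R (x::'a::real_inner)))\<^sup>2 =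
   c1\<^sup>2 * (norm a)\<^sup>2 + 2*c1*c2* inner a x + c2\<^sup>2 * (norm x)\<^sup>2"
  unfolding power2_norm_eq_inner by (simp add: inner_add_left inner_add_right inner_commute algebra_simps power2_eq_square)

lemma norm_comb3: "(norm (c1 *\<^sub>R a + c2 *\<^sub>R (x::'a::real_inner) + c3 *\<^sub>R y))\<^sup>2 =
   c1\<^sup>2 * (norm a)\<^sup>2 + c2\<^sup>2 * (norm x)\<^sup>2 + c3\<^sup>2 * (norm y)\<^sup>2 + 2*c1*c2* inner a x
    + 2*c1*c3*inner a y + 2*c2*c3*inner x y"
  unfolding power2_norm_eq_inner by (simp add: inner_add_left inner_add_right inner_commute algebra_simps power2_eq_square)

lemma den_pos:
  fixes a x :: "'a::real_inner"
  assumes "norm a < 1" "norm x \<le> 1"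
  shows "den a x > 0"
proof -
  have "\<bar>inner a x\<bar> \<le> norm a * norm x" by (rule Cauchy_Schwarz_ineq2)
  moreover have "norm a * norm x < 1"
    using assms by (metis mult_le_one norm_ge_zero less_le_trans mult_left_le le_less_trans mult_less_le_imp_less order.strict_implies_order zero_less_one)
  ultimately have "den a x \<ge> (1 - norm a * norm x)\<^sup>2"
    unfolding den_def by (auto simp: power2_eq_square algebra_simps abs_le_iff)
  moreover have "(1 - norm a * norm x)\<^sup>2 > 0" using \<open>norm a * norm x < 1\<close> by simp
  ultimately show ?thesis by linarith
qed

lemma mob_norm:
  fixes a x :: "'a::real_inner"
  assumes "den a x \<noteq> 0"
  shows "(norm (mob a x))\<^sup>2 = 1 - (1 - (norm a)\<^sup>2) * (1 - (norm x)\<^sup>2) / den a x"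
proof -
  have "(norm (mob a x))\<^sup>2 = (1/den a x)\<^sup>2 * (norm ((1 + 2 * inner a x + (norm x)\<^sup>2) *\<^sub>R a + (1 - (norm a)\<^sup>2) *\<^sub>R x))\<^sup>2"
    unfolding mob_def by (simp only: norm_scaleR power_mult_distrib power2_abs)
  also have "\<dots> = (1/den a x)\<^sup>2 * ((1 + 2 * inner a x + (norm x)\<^sup>2)\<^sup>2 * (norm a)\<^sup>2 + 2*(1 + 2 * inner a x + (norm x)\<^sup>2)*(1 - (norm a)\<^sup>2) * inner a x + (1 - (norm a)\<^sup>2)\<^sup>2 * (norm x)\<^sup>2)"
    by (simp only: norm_comb2)
  also have "\<dots> = 1 - (1 - (norm a)\<^sup>2) * (1 - (norm x)\<^sup>2) / den a x"
    by (rule mob_norm_scalar[OF den_def assms])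
  finally show ?thesis .
qed

lemma mob_expand: "mob a x = ((1 + 2 * inner a x + (norm x)\<^sup>2)/den a x) *\<^sub>R a + ((1 - (norm a)\<^sup>2)/den a x) *\<^sub>R x"
  unfolding mob_def by (simp add: scaleR_add_right)

lemma comb_diff_lemma: "(c1 *\<^sub>R a + c2 *\<^sub>R x) - (c3 *\<^sub>R a + c4 *\<^sub>R y) = (c1 - c3) *\<^sub>R a + c2 *\<^sub>R x + (-c4) *\<^sub>R (y::'a::real_vector)"
  by (simp add: algebra_simps)

lemma mob_dist:
  fixes a x y :: "'a::real_inner"
  assumes "den a x \<noteq> 0" "den a y \<noteq> 0"
  shows "(norm (mob a x - mob a y))\<^sup>2 = (1 - (norm a)\<^sup>2)\<^sup>2 * (norm (x - y))\<^sup>2 / (den a x * den a y)"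
proof -
  have "mob a x - mob a y = ((1 + 2 * inner a x + (norm x)\<^sup>2)/den a x - (1 + 2 * inner a y + (norm y)\<^sup>2)/den a y) *\<^sub>R a
     + ((1 - (norm a)\<^sup>2)/den a x) *\<^sub>R x + (- ((1 - (norm a)\<^sup>2)/den a y)) *\<^sub>R y"
    unfolding mob_expand by (rule comb_diff_lemma)
  hence "(norm (mob a x - mob a y))\<^sup>2 = ((1 + 2 * inner a x + (norm x)\<^sup>2)/den a x - (1 + 2 * inner a y + (norm y)\<^sup>2)/den a y)\<^sup>2 * (norm a)\<^sup>2
     + ((1 - (norm a)\<^sup>2)/den a x)\<^sup>2 * (norm x)\<^sup>2 + (- ((1 - (norm a)\<^sup>2)/den a y))\<^sup>2 * (norm y)\<^sup>2
     + 2*((1 + 2 * inner a x + (norm x)\<^sup>2)/den a x - (1 + 2 * inner a y + (norm y)\<^sup>2)/den a y)*((1 - (norm a)\<^sup>2)/den a x)*inner a x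
     + 2*((1 + 2 * inner a x + (norm x)\<^sup>2)/den a x - (1 + 2 * inner a y + (norm y)\<^sup>2)/den a y)*(- ((1 - (norm a)\<^sup>2)/den a y))*inner a y
     + 2*((1 - (norm a)\<^sup>2)/den a x)*(- ((1 - (norm a)\<^sup>2)/den a y))*inner x y"
    by (simp only: norm_comb3)
  also have "\<dots> = (1 - (norm a)\<^sup>2)\<^sup>2 * ((norm x)\<^sup>2 + (norm y)\<^sup>2 - 2 * inner x y) / (den a x * den a y)"
    by (rule mob_dist_scalar[OF den_def den_def assms])
  also have "(norm x)\<^sup>2 + (norm y)\<^sup>2 - 2 * inner x y = (norm (x - y))\<^sup>2"
    unfolding power2_norm_eq_inner by (simp add: inner_diff_left inner_diff_right inner_commute)
  finally show ?thesis .
qed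

lemma mob_inv_scalar:
  fixes al b g d :: real
  assumes "d = 1+2*b+al*g" "d \<noteq> 0" "al \<noteq> 1"
  shows "1 - 2*(((1+2*b+g)/d)*al + ((1-al)/d)*b) + al*(1 - (1-al)*(1-g)/d) = (1-al)^2/d"
    and "1 - 2*(((1+2*b+g)/d)*al + ((1-al)/d)*b) + (1 - (1-al)*(1-g)/d) = (1-al)*(1+2*b+g)/d"
    and "(1-al)^2/d \<noteq> 0"
proof -
  have e1: "d - 2*((1+2*b+g)*al + (1-al)*b) + al*(d - (1-al)*(1-g)) = (1-al)^2"
    unfolding assms(1) by algebra
  have e2: "d - 2*((1+2*b+g)*al + (1-al)*b) + (d - (1-al)*(1-g)) = (1-al)*(1+2*b+g)"
    unfolding assms(1) by algebra
  have "1 - 2*(((1+2*b+g)/d)*al + ((1-al)/d)*b) + al*(1 - (1-al)*(1-g)/d)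
      = (d - 2*((1+2*b+g)*al + (1-al)*b) + al*(d - (1-al)*(1-g)))/d"
    using assms(2) by (simp add: field_simps)
  thus "1 - 2*(((1+2*b+g)/d)*al + ((1-al)/d)*b) + al*(1 - (1-al)*(1-g)/d) = (1-al)^2/d"
    unfolding e1 .
  have "1 - 2*(((1+2*b+g)/d)*al + ((1-al)/d)*b) + (1 - (1-al)*(1-g)/d)
      = (d - 2*((1+2*b+g)*al + (1-al)*b) + (d - (1-al)*(1-g)))/d"
    using assms(2) by (simp add: field_simps)
  thus "1 - 2*(((1+2*b+g)/d)*al + ((1-al)/d)*b) + (1 - (1-al)*(1-g)/d) = (1-al)*(1+2*b+g)/d"
    unfolding e2 .
  show "(1-al)^2/d \<noteq> 0" using assms by simp
qed

lemma den_neg: "den (-a) y = 1 - 2 * inner a y + (norm a)\<^sup>2 * (norm y)\<^sup>2"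
  unfolding den_def by simp

lemma mob_inv:
  fixes a x :: "'a::real_inner"
  assumes "den a x \<noteq> 0" "norm a \<noteq> 1"
  shows "mob (-a) (mob a x) = x"
proof -
  define d P Q where "d = den a x" "P = 1 + 2 * inner a x + (norm x)\<^sup>2" "Q = 1 - (norm a)\<^sup>2"
  define y where "y = mob a x"
  have y: "y = (P/d) *\<^sub>R a + (Q/d) *\<^sub>R x" unfolding y_def d_P_Q_def by (rule mob_expand)
  have al1: "(norm a)\<^sup>2 \<noteq> 1" using assms(2) norm_ge_zero[of a] by (smt (verit) power2_eq_1_iff)
  have ay: "inner a y = (P/d) * (norm a)\<^sup>2 + (Q/d) * inner a x"
    unfolding y by (simp add: inner_add_right power2_norm_eq_inner)
  have ny: "(norm y)\<^sup>2 = 1 - Q * (1 - (norm x)\<^sup>2) / d"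
    unfolding y_def d_P_Q_def by (rule mob_norm[OF assms(1)])
  note sc = mob_inv_scalar[OF den_def[of a x] assms(1) al1, folded d_P_Q_def]
  have D: "den (-a) y = Q^2/d"
    unfolding den_neg ay ny using sc(1) unfolding d_P_Q_def by simp
  have S: "1 + 2 * inner (-a) y + (norm y)\<^sup>2 = Q*P/d"
    unfolding inner_minus_left ay ny using sc(2) unfolding d_P_Q_def by simp
  have "mob (-a) y = ((Q*P/d)/(Q^2/d)) *\<^sub>R (-a) + (Q/(Q^2/d)) *\<^sub>R y"
    unfolding mob_expand[of "-a" y] D S by (simp add: d_P_Q_def)
  also have "\<dots> = ((Q/(Q^2/d))*(P/d) - (Q*P/d)/(Q^2/d)) *\<^sub>R a + ((Q/(Q^2/d))*(Q/d)) *\<^sub>R x"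
    unfolding y by (simp add: algebra_simps)
  also have "(Q/(Q^2/d))*(P/d) - (Q*P/d)/(Q^2/d) = 0" by (simp add: field_simps)
  also have "(Q/(Q^2/d))*(Q/d) = 1"
  proof -
    have "Q \<noteq> 0" "d \<noteq> 0" using al1 assms(1) unfolding d_P_Q_def by auto
    thus ?thesis by (simp add: field_simps power2_eq_square)
  qed
  finally show ?thesis unfolding y_def by simp
qed

lemma mob_zero [simp]: "mob a 0 = a"
  unfolding mob_def den_def by simp

lemma mob_zero_left [simp]: "mob 0 x = x"
  unfolding mob_def den_def by simp

lemma mob_self: "mob (-a) a = (0::'a::real_inner)"
  unfolding mob_def den_def by (simp add: power2_norm_eq_inner algebra_simps)

lemma mob_norm_less:
  fixes a x :: "'a::real_inner"
  assumes "norm a < 1" "norm x < 1"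
  shows "norm (mob a x) < 1"
proof -
  have d: "den a x > 0" using den_pos[OF assms(1) less_imp_le[OF assms(2)]] .
  have "(1 - (norm a)\<^sup>2) * (1 - (norm x)\<^sup>2) / den a x > 0"
    using assms d by (intro divide_pos_pos mult_pos_pos) (auto simp: abs_square_less_1)
  hence "(norm (mob a x))\<^sup>2 < 1" using mob_norm[of a x] d by simp
  thus ?thesis by (simp add: abs_square_less_1)
qed

lemma mob_norm_le:
  fixes a x :: "'a::real_inner"
  assumes "norm a < 1" "norm x \<le> 1"
  shows "norm (mob a x) \<le> 1"
proof -
  have d: "den a x > 0" using den_pos assms by auto
  have "(1 - (norm a)\<^sup>2) * (1 - (norm x)\<^sup>2) / den a x \<ge> 0"
    using assms d by (intro divide_nonneg_pos mult_nonneg_nonneg) (auto simp: abs_square_le_1)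
  hence "(norm (mob a x))\<^sup>2 \<le> 1" using mob_norm[of a x] d by simp
  thus ?thesis by (simp add: abs_square_le_1)
qed

lemma mob_norm_eq1:
  fixes a x :: "'a::real_inner"
  assumes "norm a < 1" "norm x = 1"
  shows "norm (mob a x) = 1"
proof -
  have d: "den a x > 0" using den_pos[OF assms(1)] assms(2) by simp
  hence "(norm (mob a x))\<^sup>2 = 1" using mob_norm[of a x] assms by simp
  thus ?thesis using norm_ge_zero[of "mob a x"] by (smt (verit) power2_eq_1_iff)
qed

definition hdistB :: "'a::real_inner \<Rightarrow> 'a \<Rightarrow> real" where
  "hdistB X Y = arcosh (1 + 2 * (norm (X - Y))\<^sup>2 / ((1 - (norm X)\<^sup>2) * (1 - (norm Y)\<^sup>2)))"

lemma hdist_scalar: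
  fixes Q n x y dx dy :: real
  assumes "Q \<noteq> 0" "x \<noteq> 0" "y \<noteq> 0" "dx \<noteq> 0" "dy \<noteq> 0"
  shows "2 * (Q\<^sup>2 * n / (dx * dy)) / ((Q * x / dx) * (Q * y / dy)) = 2 * n / (x * y)"
  using assms by (simp add: field_simps power2_eq_square)

lemma hdistB_mob:
  fixes a X Y :: "'a::real_inner"
  assumes "norm a < 1" "norm X < 1" "norm Y < 1"
  shows "hdistB (mob a X) (mob a Y) = hdistB X Y"
proof -
  have dx: "den a X > 0" and dy: "den a Y > 0"
    using den_pos[OF assms(1) less_imp_le[OF assms(2)]] den_pos[OF assms(1) less_imp_le[OF assms(3)]] by auto
  have Q: "1 - (norm a)\<^sup>2 > 0" using assms by (simp add: abs_square_less_1)
  have X: "1 - (norm X)\<^sup>2 > 0" "1 - (norm Y)\<^sup>2 > 0" using assms by (auto simp add: abs_square_less_1)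
  have "2 * (norm (mob a X - mob a Y))\<^sup>2 / ((1 - (norm (mob a X))\<^sup>2) * (1 - (norm (mob a Y))\<^sup>2))
     = 2 * ((1 - (norm a)\<^sup>2)\<^sup>2 * (norm (X - Y))\<^sup>2 / (den a X * den a Y)) /
        (((1 - (norm a)\<^sup>2) * (1 - (norm X)\<^sup>2) / den a X) * ((1 - (norm a)\<^sup>2) * (1 - (norm Y)\<^sup>2) / den a Y))"
    using mob_dist[of a X Y] mob_norm[of a X] mob_norm[of a Y] dx dy by simp
  also have "\<dots> = 2 * (norm (X - Y))\<^sup>2 / ((1 - (norm X)\<^sup>2) * (1 - (norm Y)\<^sup>2))"
    by (rule hdist_scalar) (use dx dy Q X in auto)
  finally show ?thesis unfolding hdistB_def by simp
qed

lemma hdistB_ge1: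
  fixes X Y :: "'a::real_inner"
  assumes "norm X < 1" "norm Y < 1"
  shows "1 + 2 * (norm (X - Y))\<^sup>2 / ((1 - (norm X)\<^sup>2) * (1 - (norm Y)\<^sup>2)) \<ge> 1"
proof -
  have X: "1 - (norm X)\<^sup>2 > 0" "1 - (norm Y)\<^sup>2 > 0" using assms by (auto simp add: abs_square_less_1)
  thus ?thesis by (intro add_increasing2 divide_nonneg_pos) auto
qed

lemma hdistB_0: "hdistB X 0 = arcosh (1 + 2 * (norm X)\<^sup>2 / (1 - (norm X)\<^sup>2))"
  unfolding hdistB_def by simp

lemma cosh_hdistB:
  fixes X Y :: "'a::real_inner"
  assumes "norm X < 1" "norm Y < 1"
  shows "cosh (hdistB X Y) = 1 + 2 * (norm (X - Y))\<^sup>2 / ((1 - (norm X)\<^sup>2) * (1 - (norm Y)\<^sup>2))"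
  unfolding hdistB_def using hdistB_ge1[OF assms] by simp

lemma hdistB_nonneg:
  fixes X Y :: "'a::real_inner"
  assumes "norm X < 1" "norm Y < 1"
  shows "hdistB X Y \<ge> 0"
  unfolding hdistB_def using hdistB_ge1[OF assms] by simp

lemma hdistB_sym: "hdistB X Y = hdistB Y X"
  unfolding hdistB_def by (simp add: norm_minus_commute mult.commute)

lemma hdistB_refl [simp]: "hdistB X X = 0"
  unfolding hdistB_def by simp


type_synonym v3 = "complex \<times> real"

definition Lf :: "v3 \<times> v3 \<times> v3 \<Rightarrow> v3 \<Rightarrow> v3" where
  "Lf F X = Re (fst X) *\<^sub>R fst F + Im (fst X) *\<^sub>R fst (snd F) + snd X *\<^sub>R snd (snd F)"

definition orth :: "v3 \<times> v3 \<times> v3 \<Rightarrow> bool" where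
  "orth F \<longleftrightarrow> inner (fst F) (fst F) = 1 \<and> inner (fst (snd F)) (fst (snd F)) = 1 \<and>
     inner (snd (snd F)) (snd (snd F)) = 1 \<and> inner (fst F) (fst (snd F)) = 0 \<and>
     inner (fst F) (snd (snd F)) = 0 \<and> inner (fst (snd F)) (snd (snd F)) = 0"

lemma inner_v3: "inner (X::v3) Y = Re (fst X) * Re (fst Y) + Im (fst X) * Im (fst Y) + snd X * snd Y"
  by (cases X; cases Y) (simp add: inner_complex_def)

lemma Lf_inner:
  assumes "orth F"
  shows "inner (Lf F X) (Lf F Y) = inner X Y"
  using assms unfolding Lf_def orth_def inner_v3[of X Y]
  by (simp add: inner_add_left inner_add_right inner_commute algebra_simps)


lemma Lf_norm: "orth F \<Longrightarrow> norm (Lf F X) = norm X"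
  using Lf_inner[of F X X] by (simp add: norm_eq_sqrt_inner)

lemma linear_Lf: "linear (Lf F)"
  unfolding Lf_def by (intro linearI) (auto simp: algebra_simps)

lemma Lf_diff: "Lf F X - Lf F Y = Lf F (X - Y)"
  using linear_diff[OF linear_Lf] by metis

lemma Lf_dist: "orth F \<Longrightarrow> norm (Lf F X - Lf F Y) = norm (X - Y)"
  by (simp add: Lf_diff Lf_norm)

lemma Lf_inj: "orth F \<Longrightarrow> inj (Lf F)"
  by (intro injI) (metis Lf_dist eq_iff_diff_eq_0 norm_eq_zero)

lemma Lf_surj: "orth F \<Longrightarrow> surj (Lf F)"
  using eucl.linear_inj_imp_surj[OF linear_Lf Lf_inj] by blast

lemma Lf_zero [simp]: "Lf F 0 = 0"
  unfolding Lf_def by simp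

lemma continuous_on_Lf: "continuous_on S (\<lambda>(F,X). Lf F X)"
  unfolding Lf_def case_prod_unfold by (intro continuous_intros)

lemma continuous_on_Lf1: "continuous_on S (Lf F)"
  unfolding Lf_def by (intro continuous_intros)




lemma closed_orth: "closed {F. orth F}"
proof -
  have e: "{F. orth F} = {F. inner (fst F) (fst F) = 1} \<inter> {F. inner (fst (snd F)) (fst (snd F)) = 1} \<inter>
     {F. inner (snd (snd F)) (snd (snd F)) = 1} \<inter> {F. inner (fst F) (fst (snd F)) = 0} \<inter>
     {F. inner (fst F) (snd (snd F)) = 0} \<inter> {F. inner (fst (snd F)) (snd (snd F)) = 0}"
    unfolding orth_def by auto
  show ?thesis unfolding e
    by (intro closed_Int closed_Collect_eq continuous_on_inner continuous_on_fst continuous_on_snd continuous_on_id continuous_on_const)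
qed

lemma bounded_orth: "bounded {F. orth F}"
proof -
  have "{F. orth F} \<subseteq> cball 0 3"
  proof
    fix F assume "F \<in> {F. orth F}"
    hence "norm (fst F) = 1" "norm (fst (snd F)) = 1" "norm (snd (snd F)) = 1"
      unfolding orth_def by (auto simp: norm_eq_sqrt_inner)
    moreover have "norm F \<le> norm (fst F) + norm (snd F)" "norm (snd F) \<le> norm (fst (snd F)) + norm (snd (snd F))"
      using norm_Pair_le[of "fst F" "snd F"] norm_Pair_le[of "fst (snd F)" "snd (snd F)"] by auto
    ultimately show "F \<in> cball 0 3" by auto
  qed
  thus ?thesis by (rule bounded_subset[OF bounded_cball])
qed

lemma compact_orth: "compact {F. orth F}"
  by (simp add: compact_eq_bounded_closed closed_orth bounded_orth)

definition pc :: v3 where "pc = (0, -1)"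

lemma norm_pc [simp]: "norm pc = 1"
  unfolding pc_def by (simp add: norm_Pair)

lemma snd_pc [simp]: "snd pc = -1" and fst_pc [simp]: "fst pc = 0"
  unfolding pc_def by auto

lemma norm_v3_sq: "(norm (p::v3))\<^sup>2 = (cmod (fst p))\<^sup>2 + (snd p)\<^sup>2"
  by (cases p) (simp add: norm_Pair)

lemma phiH_alt: "phiH p = pc + (2 / (norm (p - pc))\<^sup>2) *\<^sub>R (p - pc)"
proof (cases p)
  case (Pair z t)
  have "(norm (p - pc))\<^sup>2 = (cmod z)\<^sup>2 + (t + 1)\<^sup>2"
    unfolding norm_v3_sq Pair pc_def by simp
  thus ?thesis unfolding phiH_def Pair pc_def Let_def
    by (simp add: scaleR_conv_of_real)
qed

lemma inv_sph_inv:
  fixes c p :: "'a::real_inner"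
  assumes "p \<noteq> c" "r \<noteq> 0"
  shows "c + (r / (norm ((c + (r / (norm (p - c))\<^sup>2) *\<^sub>R (p - c)) - c))\<^sup>2) *\<^sub>R
           ((c + (r / (norm (p - c))\<^sup>2) *\<^sub>R (p - c)) - c) = p"
proof -
  define A where "A = (norm (p - c))\<^sup>2"
  have A: "A > 0" using assms unfolding A_def by simp
  have "(norm ((r / A) *\<^sub>R (p - c)))\<^sup>2 = r\<^sup>2 / A"
  proof -
    have "(norm ((r / A) *\<^sub>R (p - c)))\<^sup>2 = (r / A)\<^sup>2 * A"
      unfolding A_def by (simp only: norm_scaleR power_mult_distrib power2_abs)
    also have "\<dots> = r\<^sup>2 / A" using A by (simp add: power2_eq_square)
    finally show ?thesis .
  qed
  hence "(r / (norm ((c + (r / A) *\<^sub>R (p - c)) - c))\<^sup>2) * (r / A) = 1"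
    using A assms by (simp add: field_simps power2_eq_square)
  hence "c + (r / (norm ((c + (r / A) *\<^sub>R (p - c)) - c))\<^sup>2) *\<^sub>R ((c + (r / A) *\<^sub>R (p - c)) - c) = c + (p - c)"
    by simp
  thus ?thesis unfolding A_def by simp
qed

lemma inv_sph_dist:
  fixes c p q :: "'a::real_inner"
  assumes "p \<noteq> c" "q \<noteq> c"
  shows "(norm ((c + (r / (norm (p - c))\<^sup>2) *\<^sub>R (p - c)) - (c + (r / (norm (q - c))\<^sup>2) *\<^sub>R (q - c))))\<^sup>2
      = r\<^sup>2 * (norm (p - q))\<^sup>2 / ((norm (p - c))\<^sup>2 * (norm (q - c))\<^sup>2)"
proof -
  define u v where "u = p - c" "v = q - c"
  define A B where "A = (norm u)\<^sup>2" "B = (norm v)\<^sup>2"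
  have A: "A > 0" "B > 0" using assms unfolding A_B_def u_v_def by auto
  have "(c + (r / A) *\<^sub>R u) - (c + (r / B) *\<^sub>R v) = (r / A) *\<^sub>R u + (- (r / B)) *\<^sub>R v" by simp
  hence "(norm ((c + (r / A) *\<^sub>R u) - (c + (r / B) *\<^sub>R v)))\<^sup>2 = (r/A)\<^sup>2 * A + 2 * (r/A) * (- (r/B)) * inner u v + (- (r/B))\<^sup>2 * B"
    unfolding A_B_def by (simp only: norm_comb2)
  also have "\<dots> = r\<^sup>2 * (A + B - 2 * inner u v) / (A * B)"
    using A by (simp add: field_simps power2_eq_square)
  also have "A + B - 2 * inner u v = (norm (p - q))\<^sup>2"
  proof -
    have "p - q = u - v" unfolding u_v_def by simp
    thus ?thesis unfolding A_B_def power2_norm_eq_inner by (simp add: inner_diff_left inner_diff_right inner_commute)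
  qed
  finally show ?thesis unfolding A_B_def u_v_def .
qed

lemma phiH_phiH: "p \<noteq> pc \<Longrightarrow> phiH (phiH p) = p"
  unfolding phiH_alt[of "phiH p"] unfolding phiH_alt[of p] by (rule inv_sph_inv) auto

lemma phiH_dist: "p \<noteq> pc \<Longrightarrow> q \<noteq> pc \<Longrightarrow>
   (norm (phiH p - phiH q))\<^sup>2 = 4 * (norm (p - q))\<^sup>2 / ((norm (p - pc))\<^sup>2 * (norm (q - pc))\<^sup>2)"
  unfolding phiH_alt[of p] phiH_alt[of q] by (subst inv_sph_dist) auto

lemma inner_pc: "inner pc p = - snd p"
  unfolding pc_def by (cases p) (simp add: inner_Pair)

lemma phiH_norm: "p \<noteq> pc \<Longrightarrow> (norm (phiH p))\<^sup>2 = 1 - 4 * snd p / (norm (p - pc))\<^sup>2"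
proof -
  assume p: "p \<noteq> pc"
  define A where "A = (norm (p - pc))\<^sup>2"
  have A: "A > 0" using p unfolding A_def by simp
  have "(norm (phiH p))\<^sup>2 = (norm (1 *\<^sub>R pc + (2 / A) *\<^sub>R (p - pc)))\<^sup>2"
    unfolding phiH_alt A_def by simp
  also have "\<dots> = 1 + 2 * (2/A) * inner pc (p - pc) + (2/A)\<^sup>2 * A"
    by (simp only: norm_comb2 A_def) simp
  also have "inner pc (p - pc) = - snd p - 1"
    by (simp add: inner_diff_right inner_pc)
  finally show ?thesis using A unfolding A_def[symmetric] by (simp add: field_simps power2_eq_square)
qed

lemma H3_ne_pc: "p \<in> H3 \<Longrightarrow> p \<noteq> pc"
  unfolding H3_def pc_def by auto

lemma phiH_H3_ball: "p \<in> H3 \<Longrightarrow> norm (phiH p) < 1"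
proof -
  assume p: "p \<in> H3"
  have A: "(norm (p - pc))\<^sup>2 > 0" using H3_ne_pc[OF p] by simp
  have "4 * snd p / (norm (p - pc))\<^sup>2 > 0" using p A unfolding H3_def by simp
  hence "(norm (phiH p))\<^sup>2 < 1" using phiH_norm[OF H3_ne_pc[OF p]] by simp
  thus ?thesis by (simp add: abs_square_less_1)
qed

lemma snd_phiH: "X \<noteq> pc \<Longrightarrow> snd (phiH X) = (1 - (norm X)\<^sup>2) / (norm (X - pc))\<^sup>2"
proof -
  assume X: "X \<noteq> pc"
  define A where "A = (norm (X - pc))\<^sup>2"
  have A: "A > 0" using X unfolding A_def by simp
  have A': "A = (norm X)\<^sup>2 + 2 * snd X + 1"
    unfolding A_def power2_norm_eq_inner by (simp add: inner_diff_left inner_diff_right inner_pc inner_commute)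
  have "snd (phiH X) = -1 + (2 / A) * (snd X + 1)"
    unfolding phiH_alt A_def[symmetric] by (simp add: pc_def)
  also have "\<dots> = (1 - (norm X)\<^sup>2) / A" using A unfolding A' by (simp add: field_simps)
  finally show ?thesis unfolding A_def .
qed

lemma ball_ne_pc: "norm X < 1 \<Longrightarrow> X \<noteq> pc"
  by auto

lemma phiH_ball_H3: "norm X < 1 \<Longrightarrow> phiH X \<in> H3"
proof -
  assume X: "norm X < 1"
  have "(1 - (norm X)\<^sup>2) > 0" using X by (simp add: abs_square_less_1)
  moreover have "(norm (X - pc))\<^sup>2 > 0" using ball_ne_pc[OF X] by simp
  ultimately show ?thesis unfolding H3_def using snd_phiH[OF ball_ne_pc[OF X]] by simp
qed

lemma hdist_phiH:
  assumes "p \<in> H3" "q \<in> H3"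
  shows "hdist p q = hdistB (phiH p) (phiH q)"
proof -
  define A B where "A = (norm (p - pc))\<^sup>2" "B = (norm (q - pc))\<^sup>2"
  have A: "A > 0" "B > 0" using H3_ne_pc assms unfolding A_B_def by auto
  have t: "snd p > 0" "snd q > 0" using assms unfolding H3_def by auto
  have "2 * (norm (phiH p - phiH q))\<^sup>2 / ((1 - (norm (phiH p))\<^sup>2) * (1 - (norm (phiH q))\<^sup>2))
      = 2 * (4 * (norm (p - q))\<^sup>2 / (A * B)) / ((4 * snd p / A) * (4 * snd q / B))"
    using phiH_dist[OF H3_ne_pc H3_ne_pc, OF assms] phiH_norm[OF H3_ne_pc, OF assms(1)]
      phiH_norm[OF H3_ne_pc, OF assms(2)] unfolding A_B_def by simp
  also have "\<dots> = (norm (p - q))\<^sup>2 / (2 * snd p * snd q)"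
    using A t by (simp add: field_simps)
  also have "(norm (p - q))\<^sup>2 = (cmod (fst p - fst q))\<^sup>2 + (snd p - snd q)\<^sup>2"
    by (simp add: norm_v3_sq)
  finally show ?thesis unfolding hdist_def hdistB_def by simp
qed

lemma phiH_pc [simp]: "phiH pc = pc"
  unfolding phiH_alt by simp

lemma phiS_norm [simp]: "norm (phiS x) = 1"
proof (cases x)
  case None thus ?thesis unfolding phiS_def by simp
next
  case (Some z)
  have ne: "(z, 0) \<noteq> pc" unfolding pc_def by simp
  have "(norm (phiH (z,0)))\<^sup>2 = 1" using phiH_norm[OF ne] by simp
  hence "norm (phiH (z,0)) = 1" using norm_ge_zero[of "phiH (z,0)"] by (smt (verit) power2_eq_1_iff)
  thus ?thesis unfolding phiS_def Some by simp
qed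

lemma phiS_Some_ne_pc: "phiS (Some z) \<noteq> pc"
proof
  assume h: "phiS (Some z) = pc"
  have ne: "(z, 0) \<noteq> pc" unfolding pc_def by simp
  have "(z, 0) = phiH (phiH (z, 0))" using phiH_phiH[OF ne] by simp
  also have "\<dots> = pc" using h unfolding phiS_def by simp
  finally show False using ne by simp
qed

definition psiS :: "v3 \<Rightarrow> spt" where
  "psiS X = (if X = pc then None else Some (fst (phiH X)))"

lemma psiS_phiS [simp]: "psiS (phiS x) = x"
proof (cases x)
  case None thus ?thesis unfolding phiS_def psiS_def by (simp add: pc_def)
next
  case (Some z)
  have ne: "(z, 0) \<noteq> pc" unfolding pc_def by simp
  show ?thesis using phiS_Some_ne_pc[of z] phiH_phiH[OF ne] unfolding psiS_def Some
    by (simp add: phiS_def)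
qed

lemma phiS_inj: "phiS x = phiS y \<Longrightarrow> x = y"
  by (metis psiS_phiS)

lemma phiS_psiS: "norm X = 1 \<Longrightarrow> phiS (psiS X) = X"
proof (cases "X = pc")
  case True thus ?thesis unfolding psiS_def phiS_def by (simp add: pc_def)
next
  case False
  assume n: "norm X = 1"
  have "snd (phiH X) = 0" using snd_phiH[OF False] n by simp
  hence "phiH X = (fst (phiH X), 0)" by (metis prod.collapse)
  hence "phiS (psiS X) = phiH (phiH X)" unfolding psiS_def phiS_def using False by simp
  also have "\<dots> = X" using phiH_phiH[OF False] .
  finally show ?thesis .
qed

definition psiB :: "v3 \<Rightarrow> hpt + spt" where
  "psiB X = (if norm X < 1 then Inl (phiH X) else Inr (psiS X))"

lemma bemb_Hbar: "y \<in> Hbar \<Longrightarrow> norm (bemb y) \<le> 1"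
  unfolding Hbar_def using phiH_H3_ball by (auto simp: less_imp_le)

lemma psiB_bemb: "y \<in> Hbar \<Longrightarrow> psiB (bemb y) = y"
  unfolding Hbar_def psiB_def using phiH_H3_ball phiH_phiH H3_ne_pc by auto

lemma bemb_psiB: "norm X \<le> 1 \<Longrightarrow> bemb (psiB X) = X"
  unfolding psiB_def using phiH_phiH[OF ball_ne_pc] phiS_psiS by auto

lemma psiB_Hbar: "norm X \<le> 1 \<Longrightarrow> psiB X \<in> Hbar"
  unfolding psiB_def Hbar_def using phiH_ball_H3 by auto

definition Mf :: "(hpt \<Rightarrow> hpt) \<Rightarrow> (spt \<Rightarrow> spt) \<Rightarrow> v3 \<Rightarrow> v3" where
  "Mf G g X = bemb (bext G g (psiB X))"

lemma Mf_Inl: "p \<in> H3 \<Longrightarrow> Mf G g (phiH p) = phiH (G p)"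
  unfolding Mf_def using psiB_bemb[of "Inl p"] by (simp add: Hbar_def)

lemma Mf_Inr: "Mf G g (phiS x) = phiS (g x)"
  unfolding Mf_def using psiB_bemb[of "Inr x"] by (simp add: Hbar_def)

lemma Mf_bemb: "y \<in> Hbar \<Longrightarrow> Mf G g (bemb y) = bemb (bext G g y)"
  unfolding Mf_def using psiB_bemb by simp

lemma Hbar_bext: "(\<forall>p\<in>H3. G p \<in> H3) \<Longrightarrow> y \<in> Hbar \<Longrightarrow> bext G g y \<in> Hbar"
  unfolding Hbar_def by auto

lemma Mf_cball: "(\<forall>p\<in>H3. G p \<in> H3) \<Longrightarrow> norm X \<le> 1 \<Longrightarrow> norm (Mf G g X) \<le> 1"
  unfolding Mf_def by (intro bemb_Hbar Hbar_bext psiB_Hbar)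

lemma bar_continuous_iff: "bar_continuous G g \<longleftrightarrow> continuous_on (cball 0 1) (Mf G g)"
proof
  assume bc: "bar_continuous G g"
  show "continuous_on (cball 0 1) (Mf G g)"
    unfolding continuous_on_iff
  proof (intro ballI allI impI)
    fix X e assume X: "X \<in> cball (0::v3) 1" and e: "(e::real) > 0"
    have x: "psiB X \<in> Hbar" using X psiB_Hbar by auto
    obtain d where d: "d > 0" "\<forall>y\<in>Hbar. dist (bemb y) (bemb (psiB X)) < d \<longrightarrow>
        dist (bemb (bext G g y)) (bemb (bext G g (psiB X))) < e"
      using bc x e unfolding bar_continuous_def by blast
    show "\<exists>d>0. \<forall>x'\<in>cball 0 1. dist x' X < d \<longrightarrow> dist (Mf G g x') (Mf G g X) < e"
    proof (intro exI[of _ d] conjI ballI impI)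
      fix Y assume Y: "Y \<in> cball (0::v3) 1" "dist Y X < d"
      have "psiB Y \<in> Hbar" using Y psiB_Hbar by auto
      moreover have "dist (bemb (psiB Y)) (bemb (psiB X)) < d"
        using Y X bemb_psiB by auto
      ultimately show "dist (Mf G g Y) (Mf G g X) < e" using d unfolding Mf_def by blast
    qed (use d in auto)
  qed
next
  assume c: "continuous_on (cball 0 1) (Mf G g)"
  show "bar_continuous G g"
    unfolding bar_continuous_def
  proof (intro ballI allI impI)
    fix x e assume x: "x \<in> Hbar" and e: "(e::real) > 0"
    obtain d where d: "d > 0" "\<forall>Y\<in>cball 0 1. dist Y (bemb x) < d \<longrightarrow> dist (Mf G g Y) (Mf G g (bemb x)) < e"
      using c e bemb_Hbar[OF x] unfolding continuous_on_iff by (metis mem_cball_0)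
    show "\<exists>d>0. \<forall>y\<in>Hbar. dist (bemb y) (bemb x) < d \<longrightarrow> dist (bemb (bext G g y)) (bemb (bext G g x)) < e"
    proof (intro exI[of _ d] conjI ballI impI)
      fix y assume y: "y \<in> Hbar" "dist (bemb y) (bemb x) < d"
      thus "dist (bemb (bext G g y)) (bemb (bext G g x)) < e"
        using d bemb_Hbar[OF y(1)] Mf_bemb[OF y(1)] Mf_bemb[OF x] by auto
    qed (use d in auto)
  qed
qed

lemma ext_closure:
  fixes f g :: "v3 \<Rightarrow> 'b::real_normed_vector"
  assumes "continuous_on (cball 0 1) f" "continuous_on (cball 0 1) g"
    "\<And>X. norm X < 1 \<Longrightarrow> f X = g X" "norm X \<le> 1"
  shows "f X = g X"
proof -
  have "continuous_on (closure (ball 0 1)) (\<lambda>X. f X - g X)"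
    using assms(1,2) by (auto intro!: continuous_intros)
  moreover have "\<And>Y. Y \<in> ball 0 1 \<Longrightarrow> f Y - g Y = 0" using assms(3) by auto
  moreover have "X \<in> closure (ball 0 1)" using assms(4) by auto
  ultimately have "f X - g X = 0" by (rule continuous_constant_on_closure)
  thus ?thesis by simp
qed

type_synonym prm = "v3 \<times> (v3 \<times> v3 \<times> v3)"

definition Th :: "prm \<Rightarrow> v3 \<Rightarrow> v3" where
  "Th P X = mob (fst P) (Lf (snd P) X)"

definition good :: "prm \<Rightarrow> bool" where
  "good P \<longleftrightarrow> norm (fst P) < 1 \<and> orth (snd P)"

definition mkG :: "prm \<Rightarrow> hpt \<Rightarrow> hpt" where
  "mkG P = restrict (\<lambda>p. phiH (Th P (phiH p))) H3"

definition mkg :: "prm \<Rightarrow> spt \<Rightarrow> spt" where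
  "mkg P x = psiS (Th P (phiS x))"

lemma Th_ball: "good P \<Longrightarrow> norm X < 1 \<Longrightarrow> norm (Th P X) < 1"
  unfolding Th_def good_def by (intro mob_norm_less) (auto simp: Lf_norm)

lemma Th_cball: "good P \<Longrightarrow> norm X \<le> 1 \<Longrightarrow> norm (Th P X) \<le> 1"
  unfolding Th_def good_def by (intro mob_norm_le) (auto simp: Lf_norm)

lemma Th_sphere: "good P \<Longrightarrow> norm X = 1 \<Longrightarrow> norm (Th P X) = 1"
  unfolding Th_def good_def by (intro mob_norm_eq1) (auto simp: Lf_norm)

lemma continuous_on_mob:
  "continuous_on {z::v3\<times>v3. norm (fst z) < 1 \<and> norm (snd z) \<le> 1} (\<lambda>z. mob (fst z) (snd z))"
proof -
  have "continuous_on {z::v3\<times>v3. norm (fst z) < 1 \<and> norm (snd z) \<le> 1}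
     (\<lambda>z. (1 / den (fst z) (snd z)) *\<^sub>R ((1 + 2 * inner (fst z) (snd z) + (norm (snd z))\<^sup>2) *\<^sub>R (fst z) + (1 - (norm (fst z))\<^sup>2) *\<^sub>R (snd z)))"
    unfolding den_def
    by (intro continuous_intros) (auto dest!: den_pos simp: den_def)
  thus ?thesis unfolding mob_def .
qed

lemma continuous_on_Th:
  "continuous_on ({P. good P} \<times> cball 0 1) (\<lambda>z. Th (fst z) (snd z))"
proof -
  have c1: "continuous_on ({P. good P} \<times> cball 0 1) (\<lambda>z::prm\<times>v3. (fst (fst z), Lf (snd (fst z)) (snd z)))"
    unfolding Lf_def by (intro continuous_intros)
  have "continuous_on ({P. good P} \<times> cball 0 1) ((\<lambda>z. mob (fst z) (snd z)) \<circ> (\<lambda>z::prm\<times>v3. (fst (fst z), Lf (snd (fst z)) (snd z))))"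
    by (rule continuous_on_compose[OF c1 continuous_on_subset[OF continuous_on_mob]])
       (auto simp: good_def Lf_norm)
  thus ?thesis unfolding Th_def comp_def by simp
qed

lemma continuous_on_Th1: "good P \<Longrightarrow> continuous_on (cball 0 1) (Th P)"
proof -
  assume P: "good P"
  have "continuous_on (cball 0 1) ((\<lambda>z. Th (fst z) (snd z)) \<circ> (\<lambda>X. (P,X)))"
  proof (rule continuous_on_compose[OF _ continuous_on_subset[OF continuous_on_Th]])
    show "continuous_on (cball 0 1) (Pair P)" by (intro continuous_intros)
    show "Pair P ` cball 0 1 \<subseteq> {P. good P} \<times> cball 0 1" using P by blast
  qed
  thus ?thesis by (simp add: comp_def)
qed

lemma Mf_mk: "good P \<Longrightarrow> norm X \<le> 1 \<Longrightarrow> Mf (mkG P) (mkg P) X = Th P X"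
proof (cases "norm X < 1")
  case True
  assume P: "good P"
  have "psiB X = Inl (phiH X)" unfolding psiB_def using True by simp
  moreover have "phiH X \<in> H3" using phiH_ball_H3[OF True] .
  ultimately show ?thesis unfolding Mf_def mkG_def
    using phiH_phiH[OF ball_ne_pc[OF True]] phiH_phiH[OF ball_ne_pc[OF Th_ball[OF P True]]] by simp
next
  case False
  assume P: "good P" and X: "norm X \<le> 1"
  hence n: "norm X = 1" using False by simp
  have "psiB X = Inr (psiS X)" unfolding psiB_def using False by simp
  thus ?thesis unfolding Mf_def mkg_def using phiS_psiS[OF n] phiS_psiS[OF Th_sphere[OF P n]] by simp
qed

lemma mob_inv': "norm a < 1 \<Longrightarrow> norm Y \<le> 1 \<Longrightarrow> mob a (mob (-a) Y) = (Y::'a::real_inner)"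
  using mob_inv[of "-a" Y] den_pos[of "-a" Y] by simp

lemma mob_inv'': "norm a < 1 \<Longrightarrow> norm Y \<le> 1 \<Longrightarrow> mob (-a) (mob a Y) = (Y::'a::real_inner)"
  using mob_inv[of "a" Y] den_pos[of "a" Y] by simp

lemma mk_Isom: "good P \<Longrightarrow> (mkG P, mkg P) \<in> Isom"
proof -
  assume P: "good P"
  have a: "norm (fst P) < 1" and o: "orth (snd P)" using P unfolding good_def by auto
  have into: "mkG P p \<in> H3" if "p \<in> H3" for p
    using that unfolding mkG_def by (simp add: phiH_ball_H3 Th_ball[OF P] phiH_H3_ball)
  have inj: "inj_on (mkG P) H3"
  proof (rule inj_onI)
    fix p q assume pq: "p \<in> H3" "q \<in> H3" "mkG P p = mkG P q"
    hence "phiH (phiH (Th P (phiH p))) = phiH (phiH (Th P (phiH q)))" unfolding mkG_def by simp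
    hence "Th P (phiH p) = Th P (phiH q)"
      using phiH_phiH[OF ball_ne_pc[OF Th_ball[OF P phiH_H3_ball]]] pq by simp
    hence "mob (- fst P) (Th P (phiH p)) = mob (- fst P) (Th P (phiH q))" by simp
    hence "Lf (snd P) (phiH p) = Lf (snd P) (phiH q)"
      unfolding Th_def using mob_inv''[OF a] Lf_norm[OF o] phiH_H3_ball pq by (simp add: less_imp_le)
    hence "phiH p = phiH q" using Lf_inj[OF o] by (simp add: inj_eq)
    hence "phiH (phiH p) = phiH (phiH q)" by simp
    thus "p = q" using phiH_phiH H3_ne_pc pq by metis
  qed
  have surj: "H3 \<subseteq> mkG P ` H3"
  proof
    fix q assume q: "q \<in> H3"
    define Z where "Z = mob (- fst P) (phiH q)"
    have Z: "norm Z < 1" unfolding Z_def using a phiH_H3_ball[OF q] by (intro mob_norm_less) auto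
    obtain X where X: "Lf (snd P) X = Z" using Lf_surj[OF o] by (metis surjD)
    have nX: "norm X < 1" using Z X Lf_norm[OF o] by metis
    have "mkG P (phiH X) = phiH (mob (fst P) Z)"
      unfolding mkG_def Th_def using phiH_ball_H3[OF nX] phiH_phiH[OF ball_ne_pc[OF nX]] X by simp
    also have "mob (fst P) Z = phiH q" unfolding Z_def
      using mob_inv'[OF a, of "phiH q"] phiH_H3_ball[OF q] by simp
    also have "phiH (phiH q) = q" using phiH_phiH[OF H3_ne_pc[OF q]] .
    finally show "q \<in> mkG P ` H3" using phiH_ball_H3[OF nX] by (metis image_eqI)
  qed
  have bij: "bij_betw (mkG P) H3 H3"
    unfolding bij_betw_def using inj surj into by auto
  have iso: "hdist (mkG P p) (mkG P q) = hdist p q" if pq: "p \<in> H3" "q \<in> H3" for p q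
  proof -
    have "hdist (mkG P p) (mkG P q) = hdistB (phiH (mkG P p)) (phiH (mkG P q))"
      using into pq by (simp add: hdist_phiH)
    also have "\<dots> = hdistB (Th P (phiH p)) (Th P (phiH q))"
      unfolding mkG_def using pq phiH_phiH[OF ball_ne_pc[OF Th_ball[OF P phiH_H3_ball]]] by simp
    also have "\<dots> = hdistB (Lf (snd P) (phiH p)) (Lf (snd P) (phiH q))"
      unfolding Th_def using hdistB_mob[OF a, of "Lf (snd P) (phiH p)" "Lf (snd P) (phiH q)"]
        Lf_norm[OF o] phiH_H3_ball[OF pq(1)] phiH_H3_ball[OF pq(2)] by simp
    also have "\<dots> = hdistB (phiH p) (phiH q)"
      unfolding hdistB_def using Lf_norm[OF o] Lf_dist[OF o] by simp
    also have "\<dots> = hdist p q" using pq by (simp add: hdist_phiH)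
    finally show ?thesis .
  qed
  have bc: "bar_continuous (mkG P) (mkg P)"
    unfolding bar_continuous_iff
    using continuous_on_Th1[OF P] by (rule continuous_on_eq) (simp add: Mf_mk[OF P])
  show ?thesis unfolding Isom_def using bij iso bc by (auto simp: mkG_def)
qed

definition p0 :: hpt where "p0 = (0, 1)"

lemma p0_H3 [simp]: "p0 \<in> H3" unfolding p0_def H3_def by simp

lemma phiH_p0 [simp]: "phiH p0 = 0"
  unfolding p0_def phiH_def Let_def by (simp add: zero_prod_def)

lemma hdistB_arg_eq:
  fixes A B C D :: "'a::real_inner"
  assumes "norm A < 1" "norm B < 1" "norm C < 1" "norm D < 1" "hdistB A B = hdistB C D"
  shows "(norm (A - B))\<^sup>2 / ((1 - (norm A)\<^sup>2) * (1 - (norm B)\<^sup>2)) = (norm (C - D))\<^sup>2 / ((1 - (norm C)\<^sup>2) * (1 - (norm D)\<^sup>2))"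
proof -
  have "cosh (hdistB A B) = cosh (hdistB C D)" using assms(5) by simp
  thus ?thesis using cosh_hdistB[OF assms(1,2)] cosh_hdistB[OF assms(3,4)] by simp
qed

lemma polar_inner: "inner x y = ((norm x)\<^sup>2 + (norm y)\<^sup>2 - (norm (x - y))\<^sup>2) / 2" for x y :: "'a::real_inner"
  unfolding power2_norm_eq_inner by (simp add: inner_diff_left inner_diff_right inner_commute)

lemma Isom_struct:
  assumes c: "(G, g) \<in> Isom"
  shows "\<exists>P. good P \<and> (\<forall>X. norm X \<le> 1 \<longrightarrow> Mf G g X = Th P X)"
proof -
  have Gin: "\<And>p. p \<in> H3 \<Longrightarrow> G p \<in> H3" and iso: "\<And>p q. p \<in> H3 \<Longrightarrow> q \<in> H3 \<Longrightarrow> hdist (G p) (G q) = hdist p q"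
    and bc: "continuous_on (cball 0 1) (Mf G g)"
    using c unfolding Isom_def bar_continuous_iff bij_betw_def by auto
  define a where "a = Mf G g 0"
  have a_eq: "a = phiH (G p0)" unfolding a_def using Mf_Inl[OF p0_H3, of G g] by simp
  have a1: "norm a < 1" unfolding a_eq by (intro phiH_H3_ball Gin p0_H3)
  have Mball: "norm (Mf G g X) < 1" if X: "norm X < 1" for X
  proof -
    have "Mf G g X = Mf G g (phiH (phiH X))" using phiH_phiH[OF ball_ne_pc[OF X]] by simp
    also have "\<dots> = phiH (G (phiH X))" by (rule Mf_Inl[OF phiH_ball_H3[OF X]])
    finally show ?thesis using phiH_H3_ball[OF Gin[OF phiH_ball_H3[OF X]]] by simp
  qed
  have Mdist: "hdistB (Mf G g X) (Mf G g Y) = hdistB X Y" if X: "norm X < 1" and Y: "norm Y < 1" for X Y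
  proof -
    have MX: "Mf G g X = phiH (G (phiH X))"
      using Mf_Inl[OF phiH_ball_H3[OF X]] phiH_phiH[OF ball_ne_pc[OF X]] by metis
    have MY: "Mf G g Y = phiH (G (phiH Y))"
      using Mf_Inl[OF phiH_ball_H3[OF Y]] phiH_phiH[OF ball_ne_pc[OF Y]] by metis
    have "hdistB (Mf G g X) (Mf G g Y) = hdist (G (phiH X)) (G (phiH Y))"
      unfolding MX MY using Gin phiH_ball_H3 X Y by (simp add: hdist_phiH)
    also have "\<dots> = hdist (phiH X) (phiH Y)" using iso phiH_ball_H3 X Y by simp
    also have "\<dots> = hdistB X Y"
      using hdist_phiH[OF phiH_ball_H3[OF X] phiH_ball_H3[OF Y]] phiH_phiH[OF ball_ne_pc[OF X]] phiH_phiH[OF ball_ne_pc[OF Y]]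
      by simp
    finally show ?thesis .
  qed
  define N where "N X = mob (-a) (Mf G g X)" for X
  have Nball: "norm (N X) < 1" if "norm X < 1" for X
    unfolding N_def using a1 Mball[OF that] by (intro mob_norm_less) auto
  have Ndist: "hdistB (N X) (N Y) = hdistB X Y" if "norm X < 1" "norm Y < 1" for X Y
    unfolding N_def using hdistB_mob[of "-a"] a1 Mball that Mdist by simp
  have N0: "N 0 = 0" unfolding N_def a_def[symmetric] by (rule mob_self)
  have Nnorm: "norm (N X) = norm X" if X: "norm X < 1" for X
  proof -
    have "(norm (N X - 0))\<^sup>2 / ((1 - (norm (N X))\<^sup>2) * (1 - (norm (0::v3))\<^sup>2)) = (norm (X - 0))\<^sup>2 / ((1 - (norm X)\<^sup>2) * (1 - (norm (0::v3))\<^sup>2))"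
      by (rule hdistB_arg_eq) (use Nball[OF X] X Ndist[OF X, of 0] N0 in auto)
    hence e: "(norm (N X))\<^sup>2 / (1 - (norm (N X))\<^sup>2) = (norm X)\<^sup>2 / (1 - (norm X)\<^sup>2)" by simp
    have "1 - (norm (N X))\<^sup>2 > 0" "1 - (norm X)\<^sup>2 > 0" using Nball[OF X] X by (auto simp: abs_square_less_1)
    hence "(norm (N X))\<^sup>2 * (1 - (norm X)\<^sup>2) = (norm X)\<^sup>2 * (1 - (norm (N X))\<^sup>2)"
      using e by (simp add: field_simps)
    hence "(norm (N X))\<^sup>2 = (norm X)\<^sup>2" by (simp add: algebra_simps)
    thus ?thesis by (simp add: power2_eq_iff_nonneg)
  qed
  have Ninner: "inner (N X) (N Y) = inner X Y" if X: "norm X < 1" and Y: "norm Y < 1" for X Y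
  proof -
    have "(norm (N X - N Y))\<^sup>2 / ((1 - (norm (N X))\<^sup>2) * (1 - (norm (N Y))\<^sup>2)) = (norm (X - Y))\<^sup>2 / ((1 - (norm X)\<^sup>2) * (1 - (norm Y)\<^sup>2))"
      by (rule hdistB_arg_eq) (use Nball X Y Ndist in auto)
    moreover define D where "D = (1 - (norm X)\<^sup>2) * (1 - (norm Y)\<^sup>2)"
    ultimately have "(norm (N X - N Y))\<^sup>2 / D = (norm (X - Y))\<^sup>2 / D"
      using Nnorm X Y by simp
    moreover have "D > 0" unfolding D_def using X Y by (auto simp: abs_square_less_1)
    ultimately have "(norm (N X - N Y))\<^sup>2 = (norm (X - Y))\<^sup>2" by simp
    thus ?thesis unfolding polar_inner[of "N X"] polar_inner[of X] using Nnorm X Y by simp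
  qed
  define h1 h2 h3 :: v3 where "h1 = (1/2, 0)" "h2 = (\<i>/2, 0)" "h3 = (0, 1/2)"
  have hn: "norm h1 < 1" "norm h2 < 1" "norm h3 < 1" unfolding h1_h2_h3_def by (auto simp: norm_Pair)
  define F where "F = (2 *\<^sub>R N h1, 2 *\<^sub>R N h2, 2 *\<^sub>R N h3)"
  have innF: "inner (2 *\<^sub>R N u) (2 *\<^sub>R N v) = 4 * inner u v" if "norm u < 1" "norm v < 1" for u v
    using Ninner[OF that] by simp
  have orthF: "orth F"
    unfolding orth_def F_def using innF hn unfolding h1_h2_h3_def by (simp add: inner_v3)
  have NL: "N X = Lf F X" if X: "norm X < 1" for X
  proof -
    have i1: "inner (N X) (2 *\<^sub>R N h1) = Re (fst X)" using Ninner[OF X hn(1)] unfolding h1_h2_h3_def by (simp add: inner_v3)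
    have i2: "inner (N X) (2 *\<^sub>R N h2) = Im (fst X)" using Ninner[OF X hn(2)] unfolding h1_h2_h3_def by (simp add: inner_v3)
    have i3: "inner (N X) (2 *\<^sub>R N h3) = snd X" using Ninner[OF X hn(3)] unfolding h1_h2_h3_def by (simp add: inner_v3)
    have "inner (N X) (Lf F X) = (Re (fst X))\<^sup>2 + (Im (fst X))\<^sup>2 + (snd X)\<^sup>2"
      unfolding Lf_def F_def using i1 i2 i3
      by (simp only: inner_add_right inner_scaleR_right fst_conv snd_conv) (simp add: power2_eq_square)
    also have "\<dots> = (norm X)\<^sup>2" unfolding power2_norm_eq_inner inner_v3[of X X] by (simp add: power2_eq_square)
    finally have ii: "inner (N X) (Lf F X) = (norm X)\<^sup>2" .
    have "(norm (N X - Lf F X))\<^sup>2 = (norm (N X))\<^sup>2 + (norm (Lf F X))\<^sup>2 - 2 * inner (N X) (Lf F X)"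
      using polar_inner[of "N X" "Lf F X"] by simp
    also have "\<dots> = 0" using ii Nnorm[OF X] Lf_norm[OF orthF] by simp
    finally show ?thesis by simp
  qed
  define P where "P = (a, F)"
  have goodP: "good P" unfolding P_def good_def using a1 orthF by simp
  have inball: "Mf G g X = Th P X" if X: "norm X < 1" for X
  proof -
    have "Mf G g X = mob a (N X)" unfolding N_def using mob_inv'[OF a1] Mball[OF X] by (simp add: less_imp_le)
    thus ?thesis unfolding Th_def P_def using NL[OF X] by simp
  qed
  show ?thesis
  proof (intro exI[of _ P] conjI allI impI goodP)
    fix X :: v3 assume "norm X \<le> 1"
    thus "Mf G g X = Th P X"
      by (rule ext_closure[OF bc continuous_on_Th1[OF goodP] inball, rotated])
  qed
qed

lemma Isom_repr:
  assumes c: "c \<in> Isom"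
  shows "\<exists>P. good P \<and> (\<forall>X. norm X \<le> 1 \<longrightarrow> Mf (fst c) (snd c) X = Th P X) \<and>
            (\<forall>p\<in>H3. fst c p = mkG P p) \<and> snd c = mkg P"
proof -
  obtain G g where cg: "c = (G, g)" by fastforce
  obtain P where P: "good P" "\<And>X. norm X \<le> 1 \<Longrightarrow> Mf G g X = Th P X"
    using Isom_struct[OF c[unfolded cg]] by blast
  have Gin: "\<And>p. p \<in> H3 \<Longrightarrow> G p \<in> H3" using c unfolding cg Isom_def bij_betw_def by auto
  have "G p = mkG P p" if p: "p \<in> H3" for p
  proof -
    have "phiH (G p) = Th P (phiH p)" using Mf_Inl[OF p, of G g] P(2) phiH_H3_ball[OF p] by simp
    hence "phiH (phiH (G p)) = phiH (Th P (phiH p))" by simp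
    thus ?thesis using phiH_phiH[OF H3_ne_pc[OF Gin[OF p]]] p unfolding mkG_def by simp
  qed
  moreover have "g = mkg P"
  proof
    fix x
    have "phiS (g x) = Th P (phiS x)" using Mf_Inr[of G g x] P(2)[of "phiS x"] by simp
    hence "psiS (phiS (g x)) = psiS (Th P (phiS x))" by simp
    thus "g x = mkg P x" unfolding mkg_def by simp
  qed
  ultimately show ?thesis using P unfolding cg by (intro exI[of _ P]) auto
qed

lemma Isom_into: "c \<in> Isom \<Longrightarrow> p \<in> H3 \<Longrightarrow> fst c p \<in> H3"
  unfolding Isom_def bij_betw_def by auto

lemma Isom_hdist: "c \<in> Isom \<Longrightarrow> p \<in> H3 \<Longrightarrow> q \<in> H3 \<Longrightarrow> hdist (fst c p) (fst c q) = hdist p q"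
  unfolding Isom_def by auto

lemma Isom_cont: "c \<in> Isom \<Longrightarrow> continuous_on (cball 0 1) (Mf (fst c) (snd c))"
  unfolding Isom_def bar_continuous_iff by auto

lemma Isom_comp:
  assumes a: "a \<in> Isom" and b: "b \<in> Isom"
  shows "iso_comp a b \<in> Isom"
proof -
  obtain A1 A2 where aa: "a = (A1, A2)" by fastforce
  obtain B1 B2 where bb: "b = (B1, B2)" by fastforce
  have bijA: "bij_betw A1 H3 H3" and bijB: "bij_betw B1 H3 H3"
    using a b unfolding aa bb Isom_def by auto
  have bij: "bij_betw (restrict (A1 \<circ> B1) H3) H3 H3"
    using bij_betw_trans[OF bijB bijA] by (rule bij_betw_cong[THEN iffD1, rotated]) auto
  have iso: "hdist (restrict (A1 \<circ> B1) H3 p) (restrict (A1 \<circ> B1) H3 q) = hdist p q" if "p \<in> H3" "q \<in> H3" for p q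
    using that Isom_hdist[OF a] Isom_hdist[OF b] Isom_into[OF b] unfolding aa bb by simp
  have intoB: "\<forall>p\<in>H3. B1 p \<in> H3" using Isom_into[OF b] unfolding bb by simp
  have eqM: "Mf (restrict (A1 \<circ> B1) H3) (A2 \<circ> B2) X = (Mf A1 A2 \<circ> Mf B1 B2) X" if X: "X \<in> cball 0 1" for X
  proof -
    have y: "psiB X \<in> Hbar" using psiB_Hbar X by simp
    have "bext (restrict (A1 \<circ> B1) H3) (A2 \<circ> B2) (psiB X) = bext A1 A2 (bext B1 B2 (psiB X))"
      using y unfolding Hbar_def by auto
    moreover have "Mf A1 A2 (bemb (bext B1 B2 (psiB X))) = bemb (bext A1 A2 (bext B1 B2 (psiB X)))"
      by (rule Mf_bemb[OF Hbar_bext[OF intoB y]])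
    ultimately show ?thesis unfolding Mf_def comp_def by simp
  qed
  have "continuous_on (cball 0 1) (Mf A1 A2 \<circ> Mf B1 B2)"
  proof (rule continuous_on_compose)
    show "continuous_on (cball 0 1) (Mf B1 B2)" using Isom_cont[OF b] unfolding bb by simp
    show "continuous_on (Mf B1 B2 ` cball 0 1) (Mf A1 A2)"
      using Isom_cont[OF a] unfolding aa fst_conv snd_conv
      by (rule continuous_on_subset) (use Mf_cball[OF intoB] in auto)
  qed
  hence bc: "bar_continuous (restrict (A1 \<circ> B1) H3) (A2 \<circ> B2)"
    unfolding bar_continuous_iff by (rule continuous_on_eq) (use eqM in auto)
  show ?thesis unfolding iso_comp_def aa bb Isom_def using bij iso bc by auto
qed

lemma Th_inj_cball:
  assumes P: "good P" and X: "norm X \<le> 1" and Y: "norm Y \<le> 1" and e: "Th P X = Th P Y"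
  shows "X = Y"
proof -
  have a: "norm (fst P) < 1" and o: "orth (snd P)" using P unfolding good_def by auto
  have "mob (- fst P) (Th P X) = mob (- fst P) (Th P Y)" using e by simp
  hence "Lf (snd P) X = Lf (snd P) Y" unfolding Th_def using mob_inv''[OF a] Lf_norm[OF o] X Y by simp
  thus ?thesis using Lf_inj[OF o] by (simp add: inj_eq)
qed

lemma Th_surj_sphere:
  assumes P: "good P" and Y: "norm Y = 1"
  shows "\<exists>X. norm X = 1 \<and> Th P X = Y"
proof -
  have a: "norm (fst P) < 1" and o: "orth (snd P)" using P unfolding good_def by auto
  define Z where "Z = mob (- fst P) Y"
  have Z: "norm Z = 1" unfolding Z_def using a Y by (intro mob_norm_eq1) auto
  obtain X where X: "Lf (snd P) X = Z" using Lf_surj[OF o] by (metis surjD)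
  have nX: "norm X = 1" using Z X Lf_norm[OF o] by metis
  have "Th P X = Y" unfolding Th_def X Z_def using mob_inv'[OF a, of Y] Y by simp
  thus ?thesis using nX by blast
qed

lemma mkg_bij: "good P \<Longrightarrow> bij (mkg P)"
proof -
  assume P: "good P"
  have "inj (mkg P)"
  proof (rule injI)
    fix x y assume "mkg P x = mkg P y"
    hence "phiS (psiS (Th P (phiS x))) = phiS (psiS (Th P (phiS y)))" unfolding mkg_def by simp
    hence "Th P (phiS x) = Th P (phiS y)" using phiS_psiS Th_sphere[OF P] by simp
    hence "phiS x = phiS y" using Th_inj_cball[OF P] by simp
    thus "x = y" by (rule phiS_inj)
  qed
  moreover have "surj (mkg P)"
    unfolding surj_def
  proof
    fix x
    obtain X where X: "norm X = 1" "Th P X = phiS x" using Th_surj_sphere[OF P, of "phiS x"] by auto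
    have "mkg P (psiS X) = x" unfolding mkg_def using X phiS_psiS[OF X(1)] by simp
    thus "\<exists>y. x = mkg P y" by metis
  qed
  ultimately show ?thesis by (simp add: bij_def)
qed

lemma Isom_bij_snd: "c \<in> Isom \<Longrightarrow> bij (snd c)"
  using Isom_repr mkg_bij by metis

lemma conj_boundary:
  assumes bcF: "bar_continuous F f" and FH: "\<forall>p\<in>H3. F p \<in> H3"
    and A: "A \<in> Isom" and B: "B \<in> Isom"
    and comm: "\<forall>p\<in>H3. fst A (F p) = F (fst B p)"
  shows "snd A (f y) = f (snd B y)"
proof -
  have cF: "continuous_on (cball 0 1) (Mf F f)" using bcF unfolding bar_continuous_iff .
  have intoA: "\<forall>p\<in>H3. fst A p \<in> H3" and intoB: "\<forall>p\<in>H3. fst B p \<in> H3" using Isom_into A B by auto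
  have c1: "continuous_on (cball 0 1) (Mf (fst A) (snd A) \<circ> Mf F f)"
    by (rule continuous_on_compose[OF cF continuous_on_subset[OF Isom_cont[OF A]]]) (use Mf_cball[OF FH] in auto)
  have c2: "continuous_on (cball 0 1) (Mf F f \<circ> Mf (fst B) (snd B))"
    by (rule continuous_on_compose[OF Isom_cont[OF B] continuous_on_subset[OF cF]]) (use Mf_cball[OF intoB] in auto)
  have inb: "(Mf (fst A) (snd A) \<circ> Mf F f) X = (Mf F f \<circ> Mf (fst B) (snd B)) X" if X: "norm X < 1" for X
  proof -
    define p where "p = phiH X"
    have p: "p \<in> H3" unfolding p_def using phiH_ball_H3[OF X] .
    have Xp: "X = phiH p" unfolding p_def using phiH_phiH[OF ball_ne_pc[OF X]] by simp
    show ?thesis unfolding Xp comp_def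
      using Mf_Inl p FH intoB comm by simp
  qed
  have "(Mf (fst A) (snd A) \<circ> Mf F f) (phiS y) = (Mf F f \<circ> Mf (fst B) (snd B)) (phiS y)"
    apply (rule ext_closure[OF c1 c2 inb])
     apply (simp add: Mf_def)
    using phiS_norm[of y] by simp
  hence "phiS (snd A (f y)) = phiS (f (snd B y))" unfolding comp_def Mf_Inr .
  thus ?thesis by (rule phiS_inj)
qed

lemma compact_sphere01: "compact (sphere (0::v3) 1)" by simp

lemma s_unif_cont:
  assumes sc: "s_continuous f"
  shows "\<forall>e>0. \<exists>d>0. \<forall>x y. sdist x y < d \<longrightarrow> sdist (f x) (f y) < e"
proof -
  define fS where "fS X = phiS (f (psiS X))" for X
  have "continuous_on (sphere 0 1) fS"
    unfolding continuous_on_iff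
  proof (intro ballI allI impI)
    fix X e assume X: "X \<in> sphere (0::v3) 1" and e: "(e::real) > 0"
    obtain d where d: "d > 0" "\<forall>y. sdist y (psiS X) < d \<longrightarrow> sdist (f y) (f (psiS X)) < e"
      using sc e unfolding s_continuous_def by blast
    show "\<exists>d>0. \<forall>x'\<in>sphere 0 1. dist x' X < d \<longrightarrow> dist (fS x') (fS X) < e"
    proof (intro exI[of _ d] conjI ballI impI)
      fix Y assume Y: "Y \<in> sphere (0::v3) 1" "dist Y X < d"
      have "sdist (psiS Y) (psiS X) < d" unfolding sdist_def using Y X phiS_psiS by auto
      thus "dist (fS Y) (fS X) < e" using d unfolding fS_def sdist_def by blast
    qed (use d in auto)
  qed
  hence uc: "uniformly_continuous_on (sphere 0 1) fS" by (rule compact_uniformly_continuous) simp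
  show ?thesis
  proof (intro allI impI)
    fix e :: real assume e: "e > 0"
    obtain d where d: "d > 0" "\<forall>x\<in>sphere 0 1. \<forall>x'\<in>sphere 0 1. dist x' x < d \<longrightarrow> dist (fS x') (fS x) < e"
      using uc e unfolding uniformly_continuous_on_def by blast
    show "\<exists>d>0. \<forall>x y. sdist x y < d \<longrightarrow> sdist (f x) (f y) < e"
    proof (intro exI[of _ d] conjI allI impI)
      fix x y assume "sdist x y < d"
      hence "dist (fS (phiS x)) (fS (phiS y)) < e" using d unfolding sdist_def by simp
      thus "sdist (f x) (f y) < e" unfolding fS_def sdist_def by simp
    qed (use d in auto)
  qed
qed

lemma compact_ball_bound:
  fixes S :: "'a::real_normed_vector set"
  assumes "compact S" "S \<subseteq> ball 0 1"
  shows "\<exists>r<1. 0 \<le> r \<and> (\<forall>X\<in>S. norm X \<le> r)"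
proof (cases "S = {}")
  case True thus ?thesis by (intro exI[of _ 0]) auto
next
  case False
  have "compact (norm ` S)" by (intro compact_continuous_image continuous_intros assms(1))
  then obtain s where s: "s \<in> norm ` S" "\<forall>t\<in>norm ` S. t \<le> s"
    using compact_attains_sup[of "norm ` S"] False by blast
  have "s < 1" using s(1) assms(2) by auto
  moreover have "0 \<le> s" using s(1) by auto
  ultimately show ?thesis using s(2) by (intro exI[of _ s]) auto
qed

lemma cosh_hdistB0:
  fixes Z :: "'a::real_inner"
  assumes "norm Z < 1"
  shows "cosh (hdistB Z 0) = 1 + 2 * (norm Z)\<^sup>2 / (1 - (norm Z)\<^sup>2)"
  using cosh_hdistB[OF assms, of 0] by simp

lemma hdist_bound_ball:
  fixes A :: "v3 set"
  assumes A: "compact A" "A \<subseteq> ball 0 1"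
  shows "\<exists>r<1. \<forall>Y\<in>A. \<forall>X. norm X < 1 \<longrightarrow> hdistB X Y \<le> R \<longrightarrow> norm X \<le> r"
proof -
  define C where "C = cosh (max R 0)"
  have C1: "C \<ge> 1" unfolding C_def by (rule cosh_real_ge_1)
  define \<rho> where "\<rho> = sqrt ((C - 1) / (C + 1))"
  have \<rho>0: "\<rho> \<ge> 0" unfolding \<rho>_def using C1 by simp
  have "(C - 1) / (C + 1) < 1" using C1 by simp
  hence \<rho>1: "\<rho> < 1" unfolding \<rho>_def by simp
  define S where "S = (\<lambda>z. mob (fst z) (snd z)) ` (A \<times> cball 0 \<rho>)"
  have "compact S" unfolding S_def
  proof (intro compact_continuous_image compact_Times assms compact_cball)
    show "continuous_on (A \<times> cball 0 \<rho>) (\<lambda>z. mob (fst z) (snd z))"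
      by (rule continuous_on_subset[OF continuous_on_mob]) (use A \<rho>1 in auto)
  qed
  moreover have "S \<subseteq> ball 0 1"
  proof
    fix W assume "W \<in> S"
    then obtain Y Z where YZ: "Y \<in> A" "norm Z \<le> \<rho>" "W = mob Y Z" unfolding S_def by auto
    have "norm Y < 1" using YZ(1) A by auto
    thus "W \<in> ball 0 1" using YZ \<rho>1 mob_norm_less[of Y Z] by auto
  qed
  ultimately obtain r where r: "r < 1" "\<forall>X\<in>S. norm X \<le> r" using compact_ball_bound by blast
  show ?thesis
  proof (intro exI[of _ r] conjI ballI allI impI r(1))
    fix Y X assume Y: "Y \<in> A" and X: "norm X < 1" and h: "hdistB X Y \<le> R"
    have Y1: "norm Y < 1" using Y A by auto
    define Z where "Z = mob (-Y) X"
    have Z1: "norm Z < 1" unfolding Z_def using X Y1 by (intro mob_norm_less) auto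
    have "hdistB Z 0 = hdistB X Y"
      unfolding Z_def using hdistB_mob[of "-Y" X Y] X Y1 mob_self[of Y] by simp
    hence "hdistB Z 0 \<le> max R 0" using h by simp
    hence "cosh (hdistB Z 0) \<le> C" unfolding C_def
      using hdistB_nonneg[OF Z1, of 0] by (subst cosh_real_nonneg_le_iff) auto
    hence "2 * (norm Z)\<^sup>2 / (1 - (norm Z)\<^sup>2) \<le> C - 1" using cosh_hdistB0[OF Z1] by simp
    moreover have "1 - (norm Z)\<^sup>2 > 0" using Z1 by (simp add: abs_square_less_1)
    ultimately have "2 * (norm Z)\<^sup>2 \<le> (C - 1) * (1 - (norm Z)\<^sup>2)" by (simp add: divide_le_eq)
    hence "(norm Z)\<^sup>2 * (C + 1) \<le> C - 1" by (simp add: algebra_simps)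
    hence "(norm Z)\<^sup>2 \<le> (C - 1) / (C + 1)" using C1 by (simp add: le_divide_eq)
    hence "norm Z \<le> \<rho>" unfolding \<rho>_def by (simp add: real_le_rsqrt)
    hence "mob Y Z \<in> S" unfolding S_def using Y by force
    moreover have "mob Y Z = X" unfolding Z_def using mob_inv'[OF Y1, of X] X by simp
    ultimately show "norm X \<le> r" using r by auto
  qed
qed

lemma continuous_on_hdistB:
  "continuous_on {z::'a::real_inner \<times> 'a. norm (fst z) < 1 \<and> norm (snd z) < 1} (\<lambda>z. hdistB (fst z) (snd z))"
proof -
  define S where "S = {z::'a \<times> 'a. norm (fst z) < 1 \<and> norm (snd z) < 1}"
  have g: "continuous_on S (\<lambda>z. 1 + 2 * (norm (fst z - snd z))\<^sup>2 / ((1 - (norm (fst z))\<^sup>2) * (1 - (norm (snd z))\<^sup>2)))"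
    by (intro continuous_intros) (auto simp: S_def power2_eq_1_iff; smt (verit) norm_ge_zero)
  have "continuous_on S (\<lambda>z. arcosh (1 + 2 * (norm (fst z - snd z))\<^sup>2 / ((1 - (norm (fst z))\<^sup>2) * (1 - (norm (snd z))\<^sup>2))))"
    by (rule continuous_on_compose2[OF continuous_on_arcosh[OF order_refl] g]) (use hdistB_ge1 in \<open>auto simp: S_def\<close>)
  thus ?thesis unfolding hdistB_def S_def .
qed

lemma hdist_bounded:
  fixes A B :: "'a::real_inner set"
  assumes "compact A" "A \<subseteq> ball 0 1" "compact B" "B \<subseteq> ball 0 1"
  shows "\<exists>R. \<forall>X\<in>A. \<forall>Y\<in>B. hdistB X Y \<le> R"
proof -
  have "compact ((\<lambda>z. hdistB (fst z) (snd z)) ` (A \<times> B))"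
    by (intro compact_continuous_image compact_Times assms continuous_on_subset[OF continuous_on_hdistB])
       (use assms in auto)
  then obtain R where "\<forall>x\<in>(\<lambda>z. hdistB (fst z) (snd z)) ` (A \<times> B). \<bar>x\<bar> \<le> R"
    using compact_imp_bounded bounded_real by blast
  thus ?thesis by (intro exI[of _ R]) force
qed

lemma euclid_to_hdist:
  fixes r e :: real
  assumes r: "r < 1" and e: "e > 0"
  shows "\<exists>\<delta>>0. \<forall>X Y::v3. norm X \<le> r \<longrightarrow> norm Y \<le> r \<longrightarrow> dist X Y < \<delta> \<longrightarrow> hdistB X Y < e"
proof -
  have sub: "cball 0 r \<times> cball 0 r \<subseteq> {z::v3\<times>v3. norm (fst z) < 1 \<and> norm (snd z) < 1}"
    using r by auto
  have cc: "compact (cball (0::v3) r \<times> cball (0::v3) r)" by (intro compact_Times compact_cball)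
  have uc: "uniformly_continuous_on (cball 0 r \<times> cball 0 r) (\<lambda>z::v3\<times>v3. hdistB (fst z) (snd z))"
    by (rule compact_uniformly_continuous[OF continuous_on_subset[OF continuous_on_hdistB sub] cc])
  obtain d where d: "d > 0" "\<forall>x\<in>cball (0::v3) r \<times> cball (0::v3) r. \<forall>x'\<in>cball 0 r \<times> cball 0 r.
      dist x' x < d \<longrightarrow> dist (hdistB (fst x') (snd x')) (hdistB (fst x) (snd x)) < e"
    using uc[unfolded uniformly_continuous_on_def, rule_format, OF e] by blast
  show ?thesis
  proof (intro exI[of _ d] conjI allI impI d(1))
    fix X Y :: v3 assume X: "norm X \<le> r" and Y: "norm Y \<le> r" and XY: "dist X Y < d"
    have "dist (X, Y) (X, X) < d" using XY by (simp add: dist_Pair_Pair dist_commute)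
    moreover have "(X, Y) \<in> cball 0 r \<times> cball 0 r" "(X, X) \<in> cball 0 r \<times> cball 0 r" using X Y by auto
    ultimately have "dist (hdistB (fst (X,Y)) (snd (X,Y))) (hdistB (fst (X,X)) (snd (X,X))) < e"
      using d(2)[rule_format, of "(X,X)" "(X,Y)"] by simp
    hence "dist (hdistB X Y) (hdistB X X) < e" by simp
    thus "hdistB X Y < e" by (simp add: dist_real_def)
  qed
qed

lemma hdist_to_euclid:
  fixes X Y :: "'a::real_inner"
  assumes X: "norm X < 1" and Y: "norm Y < 1" and e: "e > 0" and h: "hdistB X Y \<le> arcosh (1 + e\<^sup>2)"
  shows "dist X Y < e"
proof -
  have "cosh (hdistB X Y) \<le> cosh (arcosh (1 + e\<^sup>2))"
    using h hdistB_nonneg[OF X Y] by (subst cosh_real_nonneg_le_iff) auto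
  hence c: "2 * (norm (X - Y))\<^sup>2 / ((1 - (norm X)\<^sup>2) * (1 - (norm Y)\<^sup>2)) \<le> e\<^sup>2"
    using cosh_hdistB[OF X Y] by simp
  define D where "D = (1 - (norm X)\<^sup>2) * (1 - (norm Y)\<^sup>2)"
  have sq: "(norm X)\<^sup>2 < 1" "(norm Y)\<^sup>2 < 1" using X Y by (auto simp: abs_square_less_1)
  have D: "D > 0" "D \<le> 1" unfolding D_def using sq
    by (auto intro!: mult_le_one mult_pos_pos)
  have "2 * (norm (X - Y))\<^sup>2 \<le> e\<^sup>2 * D" using c D unfolding D_def[symmetric] by (simp add: divide_le_eq)
  also have "\<dots> \<le> e\<^sup>2" using D by (simp add: mult_left_le)
  finally have "2 * (norm (X - Y))\<^sup>2 \<le> e\<^sup>2" .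
  moreover have "e\<^sup>2 > 0" using e by simp
  ultimately have "(norm (X - Y))\<^sup>2 < e\<^sup>2" by linarith
  thus ?thesis unfolding dist_norm using e by (simp add: power2_less_imp_less)
qed

lemma arcosh_pos: "e > 0 \<Longrightarrow> arcosh (1 + e\<^sup>2) > (0::real)"
  by simp

lemma Th_unif:
  assumes PS: "compact PS" "PS \<subseteq> {P. good P}" and e: "e > 0"
  shows "\<exists>d>0. \<forall>P\<in>PS. \<forall>P'\<in>PS. \<forall>X Y. norm X \<le> 1 \<longrightarrow> norm Y \<le> 1 \<longrightarrow> dist P P' < d \<longrightarrow> dist X Y < d
      \<longrightarrow> dist (Th P X) (Th P' Y) < e"
proof -
  have "uniformly_continuous_on (PS \<times> cball 0 1) (\<lambda>z. Th (fst z) (snd z))"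
    by (intro compact_uniformly_continuous compact_Times compact_cball PS continuous_on_subset[OF continuous_on_Th])
       (use PS in auto)
  then obtain d where d: "d > 0" "\<forall>x\<in>PS \<times> cball 0 1. \<forall>x'\<in>PS \<times> cball 0 1.
      dist x' x < d \<longrightarrow> dist (Th (fst x') (snd x')) (Th (fst x) (snd x)) < e"
    using e unfolding uniformly_continuous_on_def by blast
  show ?thesis
  proof (intro exI[of _ "d/2"] conjI ballI allI impI)
    fix P P' :: prm and X Y :: v3 assume P: "P \<in> PS" "P' \<in> PS" and X: "norm X \<le> 1" "norm Y \<le> 1"
      and dd: "dist P P' < d/2" "dist X Y < d/2"
    have "dist (P, X) (P', Y) \<le> dist P P' + dist X Y"
      unfolding dist_Pair_Pair by (rule sqrt_sum_squares_le_sum) auto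
    hence "dist (P, X) (P', Y) < d" using dd by simp
    hence "dist (P', Y) (P, X) < d" by (simp add: dist_commute)
    moreover have "(P, X) \<in> PS \<times> cball 0 1" "(P', Y) \<in> PS \<times> cball 0 1" using P X by auto
    ultimately have "dist (Th (fst (P', Y)) (snd (P', Y))) (Th (fst (P, X)) (snd (P, X))) < e"
      using d(2)[rule_format, of "(P, X)" "(P', Y)"] by blast
    thus "dist (Th P X) (Th P' Y) < e" by (simp add: dist_commute)
  qed (use d in auto)
qed

lemma continuous_on_phiH: "continuous_on H3 phiH"
proof -
  have "continuous_on H3 (\<lambda>p. pc + (2 / (norm (p - pc))\<^sup>2) *\<^sub>R (p - pc))"
    by (intro continuous_intros) (auto dest: H3_ne_pc)
  thus ?thesis by (rule continuous_on_eq) (simp add: phiH_alt)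
qed

lemma compact_phiH: "compact K \<Longrightarrow> K \<subseteq> H3 \<Longrightarrow> compact (phiH ` K) \<and> phiH ` K \<subseteq> ball 0 1"
  using compact_continuous_image[OF continuous_on_subset[OF continuous_on_phiH]] phiH_H3_ball by auto

lemma Th_zero: "Th P 0 = fst P"
  unfolding Th_def by simp

lemma Th_hdistB: "good P \<Longrightarrow> norm X < 1 \<Longrightarrow> norm Y < 1 \<Longrightarrow> hdistB (Th P X) (Th P Y) = hdistB X Y"
  unfolding Th_def good_def
  using hdistB_mob[of "fst P" "Lf (snd P) X" "Lf (snd P) Y"] Lf_norm[of "snd P"] Lf_dist[of "snd P" X Y]
  by (simp add: hdistB_def)

lemma mkG_H3: "good P \<Longrightarrow> p \<in> H3 \<Longrightarrow> mkG P p \<in> H3"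
  using Isom_into[OF mk_Isom] by fastforce

lemma phiH_mkG: "good P \<Longrightarrow> p \<in> H3 \<Longrightarrow> phiH (mkG P p) = Th P (phiH p)"
  unfolding mkG_def using phiH_phiH[OF ball_ne_pc[OF Th_ball[OF _ phiH_H3_ball]]] by simp

lemma phiS_mkg: "good P \<Longrightarrow> phiS (mkg P x) = Th P (phiS x)"
  unfolding mkg_def using phiS_psiS[OF Th_sphere] by simp

lemma good_PS: "r < 1 \<Longrightarrow> cball 0 r \<times> {F. orth F} \<subseteq> {P. good P}"
  unfolding good_def by auto

lemma compact_PS: "compact (cball (0::v3) r \<times> {F. orth F})"
  by (intro compact_Times compact_cball compact_orth)


lemma nl_Isom: "nice_lattice G \<Longrightarrow> G \<subseteq> Isom"
  unfolding nice_lattice_def by (rule conjunct1)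

lemma nl_inv: assumes "nice_lattice G" "x \<in> G" shows "iso_inv x \<in> G"
proof -
  have "\<forall>a\<in>G. iso_inv a \<in> G" using assms(1) unfolding nice_lattice_def by (elim conjE) assumption
  thus ?thesis using assms(2) by (rule bspec)
qed

lemma nl_cocompact: assumes "nice_lattice G"
  obtains K where "compact K" "K \<subseteq> H3" "(\<Union>a\<in>G. fst a ` K) = H3"
proof -
  have "\<exists>K. compact K \<and> K \<subseteq> H3 \<and> (\<Union>a\<in>G. fst a ` K) = H3"
    using assms unfolding nice_lattice_def by (elim conjE) assumption
  then obtain K where "compact K \<and> K \<subseteq> H3 \<and> (\<Union>a\<in>G. fst a ` K) = H3" by (elim exE)
  thus ?thesis using that by (elim conjE)
qed

lemma hdist_bounded0:
  assumes "compact A" "A \<subseteq> ball (0::v3) 1"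
  obtains R where "\<And>X. X \<in> A \<Longrightarrow> hdistB X 0 \<le> R"
proof -
  obtain R where "\<forall>X\<in>A. \<forall>Y\<in>{0::v3}. hdistB X Y \<le> R"
    using hdist_bounded[OF assms, of "{0}"] by auto
  thus ?thesis using that by auto
qed

lemma Isom_bij_fst: "c \<in> Isom \<Longrightarrow> bij_betw (fst c) H3 H3"
  unfolding Isom_def by (cases c) auto

theorem lemma1p4:
  fixes F :: "hpt \<Rightarrow> hpt" and f :: "spt \<Rightarrow> spt"
    and Fs :: "nat \<Rightarrow> hpt \<Rightarrow> hpt" and fs :: "nat \<Rightarrow> spt \<Rightarrow> spt"
  assumes "equivariant_pair F f"
    and "derived_seq F f Fs fs"
    and "tame_seq Fs"
  shows "\<exists>a\<in>Isom. \<exists>b\<in>Isom. \<exists>r::nat \<Rightarrow> nat. strict_mono r \<and>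
           (\<forall>K. compact K \<and> K \<subseteq> H3 \<longrightarrow>
              (\<forall>e>0. \<forall>\<^sub>F n in sequentially. \<forall>p\<in>K.
                 hdist (Fs (r n) p) (fst a (F (fst b p))) < e)) \<and>
           (\<forall>e>0. \<forall>\<^sub>F n in sequentially. \<forall>x.
                 sdist (fs (r n) x) (snd a (f (snd b x))) < e)"
proof -
  note ep = assms(1)[unfolded equivariant_pair_def]
  have bl: "bilipschitz_bij F" using ep by (rule conjunct1)
  have sh: "s_homeomorphism f" using ep[THEN conjunct2] by (rule conjunct1)
  have bcF: "bar_continuous F f" using ep[THEN conjunct2, THEN conjunct2] by (rule conjunct1)
  obtain \<Gamma>1 \<Gamma>2 where GG: "nice_lattice \<Gamma>1 \<and> nice_lattice \<Gamma>2 \<and>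
        (\<lambda>a. restrict (F \<circ> fst a \<circ> inv_into H3 F) H3) ` \<Gamma>1 = fst ` \<Gamma>2 \<and>
        (\<lambda>a. f \<circ> snd a \<circ> inv f) ` \<Gamma>1 = snd ` \<Gamma>2"
    using ep[THEN conjunct2, THEN conjunct2, THEN conjunct2] by (elim exE) (rule that)
  have L1: "nice_lattice \<Gamma>1" using GG by (rule conjunct1)
  have L2: "nice_lattice \<Gamma>2" using GG[THEN conjunct2] by (rule conjunct1)
  have im1: "(\<lambda>a. restrict (F \<circ> fst a \<circ> inv_into H3 F) H3) ` \<Gamma>1 = fst ` \<Gamma>2"
    using GG[THEN conjunct2, THEN conjunct2] by (rule conjunct1)
  note blu = bl[unfolded bilipschitz_bij_def]
  have bijF: "bij_betw F H3 H3" using blu by (rule conjunct1)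
  obtain L where LL: "L \<ge> 1 \<and> (\<forall>p\<in>H3. \<forall>q\<in>H3. hdist p q / L \<le> hdist (F p) (F q) \<and> hdist (F p) (F q) \<le> L * hdist p q)"
    using blu[THEN conjunct2] by (elim exE) (rule that)
  have L: "L \<ge> 1" using LL by (rule conjunct1)
  have Lip: "hdist (F p) (F q) \<le> L * hdist p q" if "p \<in> H3" "q \<in> H3" for p q
    using LL[THEN conjunct2, rule_format, OF that] by (rule conjunct2)
  have FH: "\<forall>p\<in>H3. F p \<in> H3" using bijF unfolding bij_betw_def by auto
  have injF: "inj_on F H3" using bijF unfolding bij_betw_def by (rule conjunct1)
  have scf: "s_continuous f" using sh unfolding s_homeomorphism_def by auto
  obtain a b where abd: "(\<forall>n. a n \<in> Isom \<and> b n \<in> Isom) \<and>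
        (\<forall>n. \<forall>p\<in>H3. Fs n p = fst (a n) (F (fst (b n) p))) \<and>
        (\<forall>n. fs n = snd (a n) \<circ> f \<circ> snd (b n))"
    using assms(2)[unfolded derived_seq_def] by (elim exE) (rule that)
  have ab: "\<And>n. a n \<in> Isom" "\<And>n. b n \<in> Isom" using abd by auto
  have Fs_eq: "\<And>n p. p \<in> H3 \<Longrightarrow> Fs n p = fst (a n) (F (fst (b n) p))"
    using abd[THEN conjunct2, THEN conjunct1] by blast
  have fs_eq: "\<And>n. fs n = snd (a n) \<circ> f \<circ> snd (b n)"
    using abd[THEN conjunct2, THEN conjunct2] by blast
  obtain q where q: "q \<in> H3" and qR: "\<exists>R. \<forall>n. hdist (Fs n p0) q \<le> R"
    using assms(3)[unfolded tame_seq_def, rule_format, OF p0_H3] by (elim bexE) (rule that)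
  obtain R where R: "\<And>n. hdist (Fs n p0) q \<le> R" using qR by (elim exE) (rule that, blast)
  have G1: "\<Gamma>1 \<subseteq> Isom" using nl_Isom[OF L1] .
  have G2: "\<Gamma>2 \<subseteq> Isom" using nl_Isom[OF L2] .
  obtain K1 where K1: "compact K1" "K1 \<subseteq> H3" "(\<Union>g\<in>\<Gamma>1. fst g ` K1) = H3"
    using nl_cocompact[OF L1] by blast
  have "\<forall>n. \<exists>z. fst z \<in> \<Gamma>1 \<and> snd z \<in> K1 \<and> fst (b n) p0 = fst (fst z) (snd z)"
  proof
    fix n
    have "fst (b n) p0 \<in> (\<Union>g\<in>\<Gamma>1. fst g ` K1)" using Isom_into[OF ab(2) p0_H3] K1(3) by simp
    then obtain g where g: "g \<in> \<Gamma>1" "fst (b n) p0 \<in> fst g ` K1" by (rule UN_E)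
    then obtain k where k: "k \<in> K1" "fst (b n) p0 = fst g k" by (elim imageE)
    show "\<exists>z. fst z \<in> \<Gamma>1 \<and> snd z \<in> K1 \<and> fst (b n) p0 = fst (fst z) (snd z)"
      by (rule exI[of _ "(g, k)"]) (simp add: g(1) k)
  qed
  then obtain z where zz: "\<forall>n. fst (z n) \<in> \<Gamma>1 \<and> snd (z n) \<in> K1 \<and> fst (b n) p0 = fst (fst (z n)) (snd (z n))"
    by (elim choice[THEN exE])
  have z: "\<And>n. fst (z n) \<in> \<Gamma>1" "\<And>n. snd (z n) \<in> K1" "\<And>n. fst (b n) p0 = fst (fst (z n)) (snd (z n))"
    using zz by auto
  define \<gamma> k where "\<gamma> n = fst (z n)" and "k n = snd (z n)" for n
  have \<gamma>: "\<And>n. \<gamma> n \<in> \<Gamma>1" "\<And>n. \<gamma> n \<in> Isom" "\<And>n. k n \<in> K1" "\<And>n. k n \<in> H3" "\<And>n. fst (b n) p0 = fst (\<gamma> n) (k n)"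
  proof -
    fix n
    show "\<gamma> n \<in> \<Gamma>1" unfolding \<gamma>_def by (rule z(1))
    show "\<gamma> n \<in> Isom" unfolding \<gamma>_def by (rule subsetD[OF G1 z(1)])
    show "k n \<in> K1" unfolding k_def by (rule z(2))
    show "k n \<in> H3" unfolding k_def by (rule subsetD[OF K1(2) z(2)])
    show "fst (b n) p0 = fst (\<gamma> n) (k n)" unfolding \<gamma>_def k_def by (rule z(3))
  qed
  have "\<forall>n. \<exists>\<eta>. \<eta> \<in> \<Gamma>2 \<and> fst \<eta> = restrict (F \<circ> fst (\<gamma> n) \<circ> inv_into H3 F) H3"
  proof
    fix n
    have "(\<lambda>a. restrict (F \<circ> fst a \<circ> inv_into H3 F) H3) (\<gamma> n) \<in> (\<lambda>a. restrict (F \<circ> fst a \<circ> inv_into H3 F) H3) ` \<Gamma>1"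
      by (rule imageI[OF \<gamma>(1)])
    hence "restrict (F \<circ> fst (\<gamma> n) \<circ> inv_into H3 F) H3 \<in> fst ` \<Gamma>2" unfolding im1 by simp
    then obtain \<eta> where "\<eta> \<in> \<Gamma>2" "restrict (F \<circ> fst (\<gamma> n) \<circ> inv_into H3 F) H3 = fst \<eta>" by (elim imageE)
    thus "\<exists>\<eta>. \<eta> \<in> \<Gamma>2 \<and> fst \<eta> = restrict (F \<circ> fst (\<gamma> n) \<circ> inv_into H3 F) H3"
      by (intro exI[of _ \<eta>]) simp
  qed
  then obtain \<eta> where \<eta>\<eta>: "\<forall>n. \<eta> n \<in> \<Gamma>2 \<and> fst (\<eta> n) = restrict (F \<circ> fst (\<gamma> n) \<circ> inv_into H3 F) H3"
    by (elim choice[THEN exE])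
  have \<eta>: "\<And>n. \<eta> n \<in> \<Gamma>2" "\<And>n. fst (\<eta> n) = restrict (F \<circ> fst (\<gamma> n) \<circ> inv_into H3 F) H3"
    using \<eta>\<eta> by auto
  have \<eta>I: "\<eta> n \<in> Isom" for n using \<eta>(1) G2 by auto
  define b' where "b' n = iso_comp (iso_inv (\<gamma> n)) (b n)" for n
  define a' where "a' n = iso_comp (a n) (\<eta> n)" for n
  have b'I: "b' n \<in> Isom" for n
    unfolding b'_def using Isom_comp[OF _ ab(2)] nl_inv[OF L1 \<gamma>(1)] G1 by blast
  have a'I: "a' n \<in> Isom" for n
    unfolding a'_def using Isom_comp \<eta>I ab(1) by blast
  have bij\<gamma>: "bij_betw (fst (\<gamma> n)) H3 H3" for n using Isom_bij_fst[OF \<gamma>(2)] .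
  have b'_fst: "fst (b' n) p = inv_into H3 (fst (\<gamma> n)) (fst (b n) p)" if p: "p \<in> H3" for n p
    unfolding b'_def iso_comp_def iso_inv_def using Isom_into[OF ab(2) p] p by simp
  have kb: "fst (b' n) p0 = k n" for n
    using b'_fst[OF p0_H3] \<gamma>(5) inv_into_f_f[OF bij_betw_imp_inj_on[OF bij\<gamma>] \<gamma>(4)] by simp
  have Fs_eq': "Fs n p = fst (a' n) (F (fst (b' n) p))" if p: "p \<in> H3" for n p
  proof -
    define u where "u = fst (b' n) p"
    have bp: "fst (b n) p \<in> H3" using Isom_into[OF ab(2) p] .
    have u: "u \<in> H3" unfolding u_def b'_fst[OF p]
      using bp bij\<gamma> by (metis bij_betw_imp_surj_on inv_into_into)
    have gu: "fst (\<gamma> n) u = fst (b n) p" unfolding u_def b'_fst[OF p]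
      using bp bij\<gamma> by (metis bij_betw_imp_surj_on f_inv_into_f)
    have "fst (a' n) (F u) = fst (a n) (fst (\<eta> n) (F u))"
      unfolding a'_def iso_comp_def using FH u by simp
    also have "fst (\<eta> n) (F u) = F (fst (\<gamma> n) u)"
      unfolding \<eta>(2) using FH u inv_into_f_f[OF injF u] by simp
    finally show ?thesis unfolding u_def[symmetric] gu using Fs_eq[OF p] by simp
  qed
  have comm: "\<forall>p\<in>H3. fst (\<eta> n) (F p) = F (fst (\<gamma> n) p)" for n
    unfolding \<eta>(2) using FH inv_into_f_f[OF injF] by simp
  have fs_eq': "fs n x = snd (a' n) (f (snd (b' n) x))" for n x
  proof -
    have sb: "snd (b' n) x = inv (snd (\<gamma> n)) (snd (b n) x)"
      unfolding b'_def iso_comp_def iso_inv_def by simp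
    have "snd (a' n) (f (snd (b' n) x)) = snd (a n) (snd (\<eta> n) (f (snd (b' n) x)))"
      unfolding a'_def iso_comp_def by simp
    also have "snd (\<eta> n) (f (snd (b' n) x)) = f (snd (\<gamma> n) (snd (b' n) x))"
      by (rule conj_boundary[OF bcF FH \<eta>I \<gamma>(2) comm])
    also have "snd (\<gamma> n) (snd (b' n) x) = snd (b n) x"
      unfolding sb using Isom_bij_snd[OF \<gamma>(2)] by (simp add: bij_is_surj surj_f_inv_f)
    finally show ?thesis unfolding fs_eq by simp
  qed
  have "\<forall>n. \<exists>P. good P \<and> (\<forall>X. norm X \<le> 1 \<longrightarrow> Mf (fst (a' n)) (snd (a' n)) X = Th P X)"
    using Isom_repr[OF a'I] by blast
  then obtain Pa where PPa: "\<forall>n. good (Pa n) \<and> (\<forall>X. norm X \<le> 1 \<longrightarrow> Mf (fst (a' n)) (snd (a' n)) X = Th (Pa n) X)"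
    by (elim choice[THEN exE])
  have Pa: "\<And>n. good (Pa n)" "\<And>n X. norm X \<le> 1 \<Longrightarrow> Mf (fst (a' n)) (snd (a' n)) X = Th (Pa n) X"
    using PPa by auto
  have "\<forall>n. \<exists>P. good P \<and> (\<forall>X. norm X \<le> 1 \<longrightarrow> Mf (fst (b' n)) (snd (b' n)) X = Th P X)"
    using Isom_repr[OF b'I] by blast
  then obtain Pb where PPb: "\<forall>n. good (Pb n) \<and> (\<forall>X. norm X \<le> 1 \<longrightarrow> Mf (fst (b' n)) (snd (b' n)) X = Th (Pb n) X)"
    by (elim choice[THEN exE])
  have Pb: "\<And>n. good (Pb n)" "\<And>n X. norm X \<le> 1 \<Longrightarrow> Mf (fst (b' n)) (snd (b' n)) X = Th (Pb n) X"
    using PPb by auto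
  have a'H: "phiH (fst (a' n) w) = Th (Pa n) (phiH w)" if "w \<in> H3" for n w
    using Mf_Inl[OF that] Pa(2)[of "phiH w" n] phiH_H3_ball[OF that] by simp
  have b'H: "phiH (fst (b' n) w) = Th (Pb n) (phiH w)" if "w \<in> H3" for n w
    using Mf_Inl[OF that] Pb(2)[of "phiH w" n] phiH_H3_ball[OF that] by simp
  have a'S: "phiS (snd (a' n) x) = Th (Pa n) (phiS x)" for n x
    using Mf_Inr Pa(2)[of "phiS x" n] by simp
  have b'S: "phiS (snd (b' n) x) = Th (Pb n) (phiS x)" for n x
    using Mf_Inr Pb(2)[of "phiS x" n] by simp
  have CK1: "compact (phiH ` K1)" "phiH ` K1 \<subseteq> ball 0 1" using compact_phiH[OF K1(1,2)] by auto
  obtain rb where rb: "rb < 1" "\<And>X. X \<in> phiH ` K1 \<Longrightarrow> norm X \<le> rb"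
    using compact_ball_bound[OF CK1] by blast
  have Pb_fst: "norm (fst (Pb n)) \<le> rb" for n
  proof -
    have "fst (Pb n) = phiH (k n)" using b'H[OF p0_H3, of n] kb[of n] by (simp add: Th_zero)
    thus ?thesis using rb(2) \<gamma>(3) by simp
  qed
  obtain R1 where R1: "\<And>X. X \<in> phiH ` K1 \<Longrightarrow> hdistB X 0 \<le> R1"
    using hdist_bounded0[OF CK1] by blast
  have FK: "hdistB (phiH (F (k n))) (phiH (F p0)) \<le> L * R1" for n
  proof -
    have "hdist (F (k n)) (F p0) \<le> L * hdist (k n) p0" using Lip \<gamma>(4) p0_H3 by blast
    also have "hdist (k n) p0 = hdistB (phiH (k n)) 0" using hdist_phiH[OF \<gamma>(4) p0_H3] by simp
    also have "\<dots> \<le> R1" using R1 \<gamma>(3) by simp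
    finally have "hdist (F (k n)) (F p0) \<le> L * R1" using L by (simp add: mult_left_mono)
    thus ?thesis using hdist_phiH FH \<gamma>(4) p0_H3 by simp
  qed
  obtain r0 where r0: "r0 < 1" "\<And>X. norm X < 1 \<Longrightarrow> hdistB X (phiH (F p0)) \<le> L * R1 \<Longrightarrow> norm X \<le> r0"
    using hdist_bound_ball[of "{phiH (F p0)}" "L * R1"] phiH_H3_ball FH p0_H3 by auto
  have W: "norm (phiH (F (k n))) \<le> r0" for n
    using r0(2) FK phiH_H3_ball FH \<gamma>(4) by blast
  obtain r1 where r1: "r1 < 1" "\<And>X. norm X < 1 \<Longrightarrow> hdistB X (phiH q) \<le> R \<Longrightarrow> norm X \<le> r1"
    using hdist_bound_ball[of "{phiH q}" R] phiH_H3_ball q by auto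
  have V: "norm (phiH (Fs n p0)) \<le> r1" for n
  proof -
    have "Fs n p0 \<in> H3" using Fs_eq'[OF p0_H3] Isom_into[OF a'I] FH Isom_into[OF b'I] by simp
    moreover have "hdistB (phiH (Fs n p0)) (phiH q) \<le> R" using R[of n] hdist_phiH[OF _ q] calculation by simp
    ultimately show ?thesis using r1(2) phiH_H3_ball by blast
  qed
  obtain R2 where R2: "\<And>X::v3. X \<in> cball 0 r0 \<Longrightarrow> hdistB X 0 \<le> R2"
  proof -
    have "cball (0::v3) r0 \<subseteq> ball 0 1" using r0(1) by auto
    then obtain R where "\<And>X. X \<in> cball (0::v3) r0 \<Longrightarrow> hdistB X 0 \<le> R"
      using hdist_bounded0[OF compact_cball] by blast
    thus ?thesis using that by blast
  qed
  obtain ra where ra: "ra < 1" "\<And>(Y::v3) X. Y \<in> cball 0 r1 \<Longrightarrow> norm X < 1 \<Longrightarrow> hdistB X Y \<le> R2 \<Longrightarrow> norm X \<le> ra"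
  proof -
    have "cball (0::v3) r1 \<subseteq> ball 0 1" using r1(1) by auto
    then obtain r where "r < 1" "\<forall>Y\<in>cball (0::v3) r1. \<forall>X. norm X < 1 \<longrightarrow> hdistB X Y \<le> R2 \<longrightarrow> norm X \<le> r"
      using hdist_bound_ball[OF compact_cball, of 0 r1 R2] by blast
    thus ?thesis using that by blast
  qed
  have Pa_fst: "norm (fst (Pa n)) \<le> ra" for n
  proof -
    define Wn where "Wn = phiH (F (k n))"
    have Wn: "norm Wn < 1" unfolding Wn_def using phiH_H3_ball FH \<gamma>(4) by auto
    have "phiH (Fs n p0) = Th (Pa n) Wn"
      unfolding Wn_def using Fs_eq'[OF p0_H3] kb a'H FH \<gamma>(4) by simp
    hence "hdistB (fst (Pa n)) (phiH (Fs n p0)) = hdistB (Th (Pa n) 0) (Th (Pa n) Wn)" by (simp add: Th_zero)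
    also have "\<dots> = hdistB 0 Wn" using Th_hdistB[OF Pa(1) _ Wn] by simp
    also have "\<dots> \<le> R2" using R2[of Wn] W[of n] unfolding Wn_def by (simp add: hdistB_sym)
    finally show ?thesis using ra(2)[of "phiH (Fs n p0)" "fst (Pa n)"] V Pa(1) unfolding good_def by auto
  qed
  define PSa where "PSa = cball (0::v3) ra \<times> {F. orth F}"
  define PSb where "PSb = cball (0::v3) rb \<times> {F. orth F}"
  have PSa: "compact PSa" "PSa \<subseteq> {P. good P}" unfolding PSa_def using compact_PS good_PS ra(1) by auto
  have PSb: "compact PSb" "PSb \<subseteq> {P. good P}" unfolding PSb_def using compact_PS good_PS rb(1) by auto
  have PaIn: "Pa n \<in> PSa" for n
    using Pa_fst[of n] Pa(1)[of n] unfolding PSa_def good_def by (simp add: mem_Times_iff)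
  have PbIn: "Pb n \<in> PSb" for n
    using Pb_fst[of n] Pb(1)[of n] unfolding PSb_def good_def by (simp add: mem_Times_iff)
  have sc: "seq_compact (PSa \<times> PSb)" by (rule compact_imp_seq_compact[OF compact_Times[OF PSa(1) PSb(1)]])
  have inS: "\<forall>n. (\<lambda>n. (Pa n, Pb n)) n \<in> PSa \<times> PSb" by (simp add: PaIn PbIn)
  have "\<exists>l\<in>PSa \<times> PSb. \<exists>r. strict_mono r \<and> ((\<lambda>n. (Pa n, Pb n)) \<circ> r) \<longlonglongrightarrow> l"
    using sc[unfolded seq_compact_def, THEN spec[of _ "\<lambda>n. (Pa n, Pb n)"], THEN mp, OF inS] .
  then obtain l \<sigma> where l: "l \<in> PSa \<times> PSb" and \<sigma>: "strict_mono \<sigma>"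
    and lim: "((\<lambda>n. (Pa n, Pb n)) \<circ> \<sigma>) \<longlonglongrightarrow> l"
    by (elim bexE exE conjE)
  define Pa0 Pb0 where "Pa0 = fst l" and "Pb0 = snd l"
  have Pa0: "Pa0 \<in> PSa" "good Pa0" and Pb0: "Pb0 \<in> PSb" "good Pb0"
    using l PSa PSb unfolding Pa0_def Pb0_def by auto
  have limA: "(\<lambda>n. Pa (\<sigma> n)) \<longlonglongrightarrow> Pa0" using tendsto_fst[OF lim] unfolding Pa0_def Pb0_def comp_def by simp
  have limB: "(\<lambda>n. Pb (\<sigma> n)) \<longlonglongrightarrow> Pb0" using tendsto_snd[OF lim] unfolding Pa0_def Pb0_def comp_def by simp
  define A B where "A = (mkG Pa0, mkg Pa0)" and "B = (mkG Pb0, mkg Pb0)"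
  have AI: "A \<in> Isom" and BI: "B \<in> Isom" unfolding A_def B_def using mk_Isom Pa0 Pb0 by auto
  have bdry: "\<forall>e>0. \<forall>\<^sub>F n in sequentially. \<forall>x. sdist (fs (\<sigma> n) x) (snd A (f (snd B x))) < e"
  proof (intro allI impI)
    fix e :: real assume e: "e > 0"
    obtain d1 where d1: "d1 > 0" "\<And>P P' X Y. P \<in> PSa \<Longrightarrow> P' \<in> PSa \<Longrightarrow> norm X \<le> 1 \<Longrightarrow> norm Y \<le> 1 \<Longrightarrow>
        dist P P' < d1 \<Longrightarrow> dist X Y < d1 \<Longrightarrow> dist (Th P X) (Th P' Y) < e"
      using Th_unif[OF PSa e] by blast
    obtain d2 where d2: "d2 > 0" "\<And>x y. sdist x y < d2 \<Longrightarrow> sdist (f x) (f y) < d1"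
      using s_unif_cont[OF scf] d1(1) by blast
    obtain d3 where d3: "d3 > 0" "\<And>P P' X Y. P \<in> PSb \<Longrightarrow> P' \<in> PSb \<Longrightarrow> norm X \<le> 1 \<Longrightarrow> norm Y \<le> 1 \<Longrightarrow>
        dist P P' < d3 \<Longrightarrow> dist X Y < d3 \<Longrightarrow> dist (Th P X) (Th P' Y) < d2"
      using Th_unif[OF PSb d2(1)] by blast
    have ev1: "\<forall>\<^sub>F n in sequentially. dist (Pa (\<sigma> n)) Pa0 < d1" using limA d1(1) by (rule tendstoD)
    have ev2: "\<forall>\<^sub>F n in sequentially. dist (Pb (\<sigma> n)) Pb0 < d3" using limB d3(1) by (rule tendstoD)
    show "\<forall>\<^sub>F n in sequentially. \<forall>x. sdist (fs (\<sigma> n) x) (snd A (f (snd B x))) < e"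
      using ev1 ev2
    proof eventually_elim
      case (elim n)
      show ?case
      proof
        fix x
        define \<xi> where "\<xi> = snd (b' (\<sigma> n)) x"
        have "dist (Th (Pb (\<sigma> n)) (phiS x)) (Th Pb0 (phiS x)) < d2"
          by (rule d3(2)[OF PbIn Pb0(1)]) (use elim d3 in auto)
        hence "sdist \<xi> (snd B x) < d2"
          unfolding sdist_def \<xi>_def b'S A_def B_def using phiS_mkg[OF Pb0(2)] by simp
        hence "sdist (f \<xi>) (f (snd B x)) < d1" by (rule d2(2))
        hence "dist (Th (Pa (\<sigma> n)) (phiS (f \<xi>))) (Th Pa0 (phiS (f (snd B x)))) < e"
          unfolding sdist_def by (intro d1(2)[OF PaIn Pa0(1)]) (use elim in auto)
        thus "sdist (fs (\<sigma> n) x) (snd A (f (snd B x))) < e"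
          unfolding sdist_def fs_eq' \<xi>_def[symmetric] a'S A_def B_def using phiS_mkg[OF Pa0(2)] by simp
      qed
    qed
  qed
  have intr: "\<forall>K. compact K \<and> K \<subseteq> H3 \<longrightarrow> (\<forall>e>0. \<forall>\<^sub>F n in sequentially. \<forall>p\<in>K.
                 hdist (Fs (\<sigma> n) p) (fst A (F (fst B p))) < e)"
  proof (intro allI impI)
    fix K :: "hpt set" and e :: real
    assume KK: "compact K \<and> K \<subseteq> H3" and e: "e > 0"
    have K: "compact K" "K \<subseteq> H3" using KK by auto
    have CK: "compact (phiH ` K)" "phiH ` K \<subseteq> ball 0 1" using compact_phiH[OF K] by auto
    define CU where "CU = Th Pb0 ` phiH ` K"
    have CU: "compact CU" "CU \<subseteq> ball 0 1"
    proof -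
      show "compact CU" unfolding CU_def
        by (rule compact_continuous_image[OF continuous_on_subset[OF continuous_on_Th1[OF Pb0(2)]] CK(1)])
           (use CK(2) in auto)
      show "CU \<subseteq> ball 0 1" unfolding CU_def
      proof (rule image_subsetI)
        fix X assume "X \<in> phiH ` K"
        hence "X \<in> ball 0 1" using subsetD[OF CK(2)] by blast
        hence "norm X < 1" by simp
        thus "Th Pb0 X \<in> ball 0 1" using Th_ball[OF Pb0(2)] by simp
      qed
    qed
    obtain rU where rU: "rU < 1" "0 \<le> rU" "\<And>X. X \<in> CU \<Longrightarrow> norm X \<le> rU"
      using compact_ball_bound[OF CU] by blast
    obtain RU where RU: "\<And>X. X \<in> CU \<Longrightarrow> hdistB X 0 \<le> RU"
      using hdist_bounded0[OF CU] by blast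
    have U: "phiH (mkG Pb0 p) \<in> CU" if "p \<in> K" for p
    proof -
      have "p \<in> H3" using that K(2) by blast
      hence "phiH (mkG Pb0 p) = Th Pb0 (phiH p)" by (rule phiH_mkG[OF Pb0(2)])
      thus ?thesis unfolding CU_def using that by (simp add: image_image)
    qed
    obtain rV where rV: "rV < 1" "\<And>X. norm X < 1 \<Longrightarrow> hdistB X (phiH (F p0)) \<le> L * RU \<Longrightarrow> norm X \<le> rV"
      using hdist_bound_ball[of "{phiH (F p0)}" "L * RU"] phiH_H3_ball FH p0_H3 by auto
    have Vb: "norm (phiH (F (mkG Pb0 p))) \<le> rV" if p: "p \<in> K" for p
    proof -
      have u: "mkG Pb0 p \<in> H3" using mkG_H3[OF Pb0(2) subsetD[OF K(2) p]] .
      have "hdist (F (mkG Pb0 p)) (F p0) \<le> L * hdist (mkG Pb0 p) p0" using Lip u p0_H3 by blast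
      also have "hdist (mkG Pb0 p) p0 = hdistB (phiH (mkG Pb0 p)) 0" using hdist_phiH[OF u p0_H3] by simp
      also have "\<dots> \<le> RU" using RU U p by simp
      finally have "hdist (F (mkG Pb0 p)) (F p0) \<le> L * RU" using L by (simp add: mult_left_mono)
      hence "hdistB (phiH (F (mkG Pb0 p))) (phiH (F p0)) \<le> L * RU" using hdist_phiH FH u p0_H3 by simp
      thus ?thesis using rV(2) phiH_H3_ball FH u by blast
    qed
    define CT where "CT = Th Pa0 ` cball 0 rV"
    have CT: "compact CT" "CT \<subseteq> ball 0 1"
    proof -
      show "compact CT" unfolding CT_def
        by (rule compact_continuous_image[OF continuous_on_subset[OF continuous_on_Th1[OF Pa0(2)]] compact_cball])
           (use rV(1) in auto)
      show "CT \<subseteq> ball 0 1" unfolding CT_def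
      proof (rule image_subsetI)
        fix X :: v3 assume "X \<in> cball 0 rV"
        hence "norm X < 1" using rV(1) by simp
        thus "Th Pa0 X \<in> ball 0 1" using Th_ball[OF Pa0(2)] by simp
      qed
    qed
    obtain rT where rT: "rT < 1" "0 \<le> rT" "\<And>X. X \<in> CT \<Longrightarrow> norm X \<le> rT"
      using compact_ball_bound[OF CT] by blast
    define rT' where "rT' = rT + (1 - rT) / 2"
    have rT': "rT' < 1" "rT \<le> rT'" unfolding rT'_def using rT(1) by (auto simp: field_simps)
    obtain \<delta>4 where \<delta>4: "\<delta>4 > 0" "\<And>(X::v3) Y. norm X \<le> rT' \<Longrightarrow> norm Y \<le> rT' \<Longrightarrow> dist X Y < \<delta>4 \<Longrightarrow> hdistB X Y < e"
      using euclid_to_hdist[OF rT'(1) e] by blast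
    define \<epsilon>4 where "\<epsilon>4 = min \<delta>4 ((1 - rT) / 2)"
    have \<epsilon>4: "\<epsilon>4 > 0" unfolding \<epsilon>4_def using \<delta>4 rT by auto
    obtain d1 where d1: "d1 > 0" "\<And>P P' X Y. P \<in> PSa \<Longrightarrow> P' \<in> PSa \<Longrightarrow> norm X \<le> 1 \<Longrightarrow> norm Y \<le> 1 \<Longrightarrow>
        dist P P' < d1 \<Longrightarrow> dist X Y < d1 \<Longrightarrow> dist (Th P X) (Th P' Y) < \<epsilon>4"
      using Th_unif[OF PSa \<epsilon>4] by blast
    define h1 where "h1 = arcosh (1 + d1\<^sup>2)"
    have h1: "h1 > 0" unfolding h1_def using d1(1) by simp
    define rU' where "rU' = rU + (1 - rU) / 2"
    have rU': "rU' < 1" "rU \<le> rU'" unfolding rU'_def using rU(1) by (auto simp: field_simps)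
    have hL: "h1 / L > 0" using h1 L by simp
    obtain \<delta>2 where \<delta>2: "\<delta>2 > 0" "\<And>(X::v3) Y. norm X \<le> rU' \<Longrightarrow> norm Y \<le> rU' \<Longrightarrow> dist X Y < \<delta>2 \<Longrightarrow> hdistB X Y < h1 / L"
      using euclid_to_hdist[OF rU'(1) hL] by blast
    define \<epsilon>2 where "\<epsilon>2 = min \<delta>2 ((1 - rU) / 2)"
    have \<epsilon>2: "\<epsilon>2 > 0" unfolding \<epsilon>2_def using \<delta>2 rU by auto
    obtain d3 where d3: "d3 > 0" "\<And>P P' X Y. P \<in> PSb \<Longrightarrow> P' \<in> PSb \<Longrightarrow> norm X \<le> 1 \<Longrightarrow> norm Y \<le> 1 \<Longrightarrow>
        dist P P' < d3 \<Longrightarrow> dist X Y < d3 \<Longrightarrow> dist (Th P X) (Th P' Y) < \<epsilon>2"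
      using Th_unif[OF PSb \<epsilon>2] by blast
    have ev1: "\<forall>\<^sub>F n in sequentially. dist (Pa (\<sigma> n)) Pa0 < d1" using limA d1(1) by (rule tendstoD)
    have ev2: "\<forall>\<^sub>F n in sequentially. dist (Pb (\<sigma> n)) Pb0 < d3" using limB d3(1) by (rule tendstoD)
    show "\<forall>\<^sub>F n in sequentially. \<forall>p\<in>K. hdist (Fs (\<sigma> n) p) (fst A (F (fst B p))) < e"
      using ev1 ev2
    proof eventually_elim
      case (elim n)
      show ?case
      proof
        fix p assume pK: "p \<in> K"
        have p: "p \<in> H3" using pK K(2) by auto
        define un u where "un = fst (b' (\<sigma> n)) p" and "u = mkG Pb0 p"
        have un: "un \<in> H3" and u: "u \<in> H3" unfolding un_def u_def using Isom_into[OF b'I p] mkG_H3[OF Pb0(2) p] by auto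
        have phn: "norm (phiH p) \<le> 1" using phiH_H3_ball[OF p] by simp
        have "dist (Th (Pb (\<sigma> n)) (phiH p)) (Th Pb0 (phiH p)) < \<epsilon>2"
          by (rule d3(2)[OF PbIn Pb0(1) phn phn]) (use elim d3 in auto)
        hence dU: "dist (phiH un) (phiH u) < \<epsilon>2" unfolding un_def u_def b'H[OF p] phiH_mkG[OF Pb0(2) p] .
        have nU: "norm (phiH u) \<le> rU" using rU(3) U[OF pK] unfolding un_def u_def by simp
        have nUn: "norm (phiH un) \<le> rU'"
        proof -
          have "norm (phiH un) \<le> norm (phiH u) + dist (phiH un) (phiH u)"
            by (metis dist_norm norm_triangle_sub)
          also have "\<dots> \<le> rU + (1 - rU) / 2"
          proof -
            have "dist (phiH un) (phiH u) < (1 - rU) / 2" using dU unfolding \<epsilon>2_def by simp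
            thus ?thesis using nU by linarith
          qed
          finally show ?thesis unfolding rU'_def by linarith
        qed
        have "hdistB (phiH un) (phiH u) < h1 / L"
          by (rule \<delta>2(2)[OF nUn]) (use nU rU' dU \<epsilon>2_def in auto)
        hence hu: "hdist un u < h1 / L" using hdist_phiH[OF un u] by simp
        have "hdist (F un) (F u) \<le> L * hdist un u" using Lip un u by blast
        also have "\<dots> < L * (h1 / L)" using hu L by (intro mult_strict_left_mono) auto
        also have "\<dots> = h1" using L by simp
        finally have "hdistB (phiH (F un)) (phiH (F u)) < h1" using hdist_phiH FH un u by simp
        hence dV: "dist (phiH (F un)) (phiH (F u)) < d1" unfolding h1_def
          by (intro hdist_to_euclid phiH_H3_ball) (use FH un u d1(1) in auto)
        have "dist (Th (Pa (\<sigma> n)) (phiH (F un))) (Th Pa0 (phiH (F u))) < \<epsilon>4"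
          by (rule d1(2)[OF PaIn Pa0(1)]) (use elim dV phiH_H3_ball FH un u in \<open>auto simp: less_imp_le\<close>)
        hence dO: "dist (phiH (Fs (\<sigma> n) p)) (phiH (mkG Pa0 (F u))) < \<epsilon>4"
          unfolding Fs_eq'[OF p] un_def[symmetric] u_def[symmetric] a'H[OF FH[rule_format, OF un]] phiH_mkG[OF Pa0(2) FH[rule_format, OF u]] .
        have nT: "norm (phiH (mkG Pa0 (F u))) \<le> rT"
          using rT(3) Vb[OF pK] phiH_mkG[OF Pa0(2) FH[rule_format, OF u]] unfolding CT_def un_def u_def by auto
        have nO: "norm (phiH (Fs (\<sigma> n) p)) \<le> rT'"
        proof -
          have "norm (phiH (Fs (\<sigma> n) p)) \<le> norm (phiH (mkG Pa0 (F u))) + dist (phiH (Fs (\<sigma> n) p)) (phiH (mkG Pa0 (F u)))"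
            by (metis dist_norm norm_triangle_sub)
          also have "\<dots> \<le> rT + (1 - rT) / 2"
          proof -
            have "dist (phiH (Fs (\<sigma> n) p)) (phiH (mkG Pa0 (F u))) < (1 - rT) / 2" using dO unfolding \<epsilon>4_def by simp
            thus ?thesis using nT by linarith
          qed
          finally show ?thesis unfolding rT'_def by linarith
        qed
        have "hdistB (phiH (Fs (\<sigma> n) p)) (phiH (mkG Pa0 (F u))) < e"
          by (rule \<delta>4(2)[OF nO]) (use nT rT' dO \<epsilon>4_def in auto)
        moreover have "Fs (\<sigma> n) p \<in> H3" using Fs_eq'[OF p] Isom_into[OF a'I] FH un unfolding un_def u_def by simp
        moreover have "mkG Pa0 (F u) \<in> H3" using mkG_H3[OF Pa0(2)] FH u by simp
        ultimately show "hdist (Fs (\<sigma> n) p) (fst A (F (fst B p))) < e"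
          unfolding A_def B_def un_def u_def using hdist_phiH by simp
      qed
    qed
  qed
  show ?thesis using AI BI \<sigma> bdry intr by blast
qed

end
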